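(* Let $F_2$ be the free group on $g_1,g_2$ and $h:F_2\to\mathbb Z\times\mathbb Z$ the abelianisation homomorphism. Then the ideal $\ker(h^\#)\lhd\kappa F_2^\#$ is the principal ideal generated by $[\vec g_1,\vec g_2]\cdot[\vec g_1,\vec g_2]$.
   Context: Let $\kappa$ be a field of characteristic $0$. For a group $G$, let $*:\kappa G\to\kappa G$ be the $\kappa$-linear map with $g^*=g^{-1}$, $(\kappa G)^*$ its fixed points, and $A_G$ the quotient of $\kappa G$ by the two-sided ideal generated by all $ab-ba$, $a\in\kappa G$, $b\in(\kappa G)^*$; $*$ descends to $A_G$. $\kappa G^\#=\{x\in A_G:x^*=x\}$, $\Lambda_G=\{x\in A_G:x^*=-x\}$; group elements are identified with their images in $A_G$; $\vec x=\tfrac12(x-x^* )$; for $\vec x,\vec y\in\Lambda_G$, $\vec x\cdot\vec y=-\tfrac12(\vec x\vec y+\vec y\vec x)$ and $[\vec x,\vec y]=\tfrac12(\vec x\vec y-\vec y\vec x)$. A group homomorphism $f:G\to H$ induces a ring homomorphism $A_G\to A_H$ commuting with $*$, and $f^\#:\kappa G^\#\to\kappa H^\#$ is its restriction. *)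

theory Defs
  imports "HOL-Algebra.Group"
begin

definition galg :: "('a, 'b) monoid_scheme \<Rightarrow> ('a \<Rightarrow> 'k::field) set" where
  "galg G = {f. finite {x. f x \<noteq> 0} \<and> (\<forall>x. x \<notin> carrier G \<longrightarrow> f x = 0)}"

definition gdelta :: "'a \<Rightarrow> 'a \<Rightarrow> 'k::field" where
  "gdelta g = (\<lambda>x. if x = g then 1 else 0)"

definition gmul :: "('a, 'b) monoid_scheme \<Rightarrow> ('a \<Rightarrow> 'k::field) \<Rightarrow> ('a \<Rightarrow> 'k) \<Rightarrow> 'a \<Rightarrow> 'k" where
  "gmul G f g = (\<lambda>x. \<Sum>y\<in>{y. f y \<noteq> 0}. \<Sum>z\<in>{z. g z \<noteq> 0 \<and> y \<otimes>\<^bsub>G\<^esub> z = x}. f y * g z)"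

definition gstar :: "('a, 'b) monoid_scheme \<Rightarrow> ('a \<Rightarrow> 'k::field) \<Rightarrow> 'a \<Rightarrow> 'k" where
  "gstar G f = (\<lambda>x. if x \<in> carrier G then f (inv\<^bsub>G\<^esub> x) else 0)"

text \<open>The two-sided ideal I_G of kappa G generated by all ab - ba with a in kappa G and
  b in (kappa G)^*; A_G = kappa G / I_G.\<close>
inductive_set comm_ideal :: "('a, 'b) monoid_scheme \<Rightarrow> ('a \<Rightarrow> 'k::field) set" for G where
  gen: "a \<in> galg G \<Longrightarrow> b \<in> galg G \<Longrightarrow> gstar G b = b \<Longrightarrow>
          (\<lambda>x. gmul G a b x - gmul G b a x) \<in> comm_ideal G"
| zero: "(\<lambda>x. 0) \<in> comm_ideal G"
| add: "u \<in> comm_ideal G \<Longrightarrow> v \<in> comm_ideal G \<Longrightarrow> (\<lambda>x. u x + v x) \<in> comm_ideal G"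
| neg: "u \<in> comm_ideal G \<Longrightarrow> (\<lambda>x. - u x) \<in> comm_ideal G"
| lmul: "a \<in> galg G \<Longrightarrow> u \<in> comm_ideal G \<Longrightarrow> gmul G a u \<in> comm_ideal G"
| rmul: "a \<in> galg G \<Longrightarrow> u \<in> comm_ideal G \<Longrightarrow> gmul G u a \<in> comm_ideal G"

text \<open>Representatives in kappa G of the elements of kappa G^# = {x in A_G. x* = x}:
  y represents an element of kappa G^# iff y* - y lies in I_G.\<close>
definition sym_rep :: "('a, 'b) monoid_scheme \<Rightarrow> ('a \<Rightarrow> 'k::field) set" where
  "sym_rep G = {y \<in> galg G. (\<lambda>x. gstar G y x - y x) \<in> comm_ideal G}"

definition gvec :: "('a, 'b) monoid_scheme \<Rightarrow> ('a \<Rightarrow> 'k::field) \<Rightarrow> 'a \<Rightarrow> 'k" where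
  "gvec G f = (\<lambda>x. (f x - gstar G f x) / 2)"

definition glie :: "('a, 'b) monoid_scheme \<Rightarrow> ('a \<Rightarrow> 'k::field) \<Rightarrow> ('a \<Rightarrow> 'k) \<Rightarrow> 'a \<Rightarrow> 'k" where
  "glie G u v = (\<lambda>x. (gmul G u v x - gmul G v u x) / 2)"

definition gdot :: "('a, 'b) monoid_scheme \<Rightarrow> ('a \<Rightarrow> 'k::field) \<Rightarrow> ('a \<Rightarrow> 'k) \<Rightarrow> 'a \<Rightarrow> 'k" where
  "gdot G u v = (\<lambda>x. - (gmul G u v x + gmul G v u x) / 2)"

definition gpush :: "('a \<Rightarrow> 'c) \<Rightarrow> ('a \<Rightarrow> 'k::field) \<Rightarrow> 'c \<Rightarrow> 'k" where
  "gpush h f = (\<lambda>z. \<Sum>x\<in>{x. f x \<noteq> 0 \<and> h x = z}. f x)"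

text \<open>Representatives of the ideal of kappa G^# generated by (the class of) c:
  the least set containing c and I_G, closed under +, -, and two-sided multiplication
  by representatives of elements of kappa G^#.\<close>
inductive_set pideal :: "('a, 'b) monoid_scheme \<Rightarrow> ('a \<Rightarrow> 'k::field) \<Rightarrow> ('a \<Rightarrow> 'k) set"
  for G c where
  gen: "c \<in> pideal G c"
| zero: "(\<lambda>x. 0) \<in> pideal G c"
| add: "u \<in> pideal G c \<Longrightarrow> v \<in> pideal G c \<Longrightarrow> (\<lambda>x. u x + v x) \<in> pideal G c"
| neg: "u \<in> pideal G c \<Longrightarrow> (\<lambda>x. - u x) \<in> pideal G c"
| lmul: "r \<in> sym_rep G \<Longrightarrow> u \<in> pideal G c \<Longrightarrow> gmul G r u \<in> pideal G c"
| rmul: "r \<in> sym_rep G \<Longrightarrow> u \<in> pideal G c \<Longrightarrow> gmul G u r \<in> pideal G c"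
| cls: "u \<in> pideal G c \<Longrightarrow> w \<in> comm_ideal G \<Longrightarrow> (\<lambda>x. u x + w x) \<in> pideal G c"

text \<open>Letters: (generator, sign); generator False = g1, True = g2; sign True = +1, False = -1.\<close>
type_synonym f2letter = "bool \<times> bool"

fun f2_push :: "f2letter \<Rightarrow> f2letter list \<Rightarrow> f2letter list" where
  "f2_push a [] = [a]"
| "f2_push a (b # ys) = (if fst a = fst b \<and> snd a \<noteq> snd b then ys else a # b # ys)"

definition f2_red :: "f2letter list \<Rightarrow> f2letter list" where
  "f2_red xs = foldr f2_push xs []"

fun f2_reduced :: "f2letter list \<Rightarrow> bool" where
  "f2_reduced (a # b # ys) = (\<not> (fst a = fst b \<and> snd a \<noteq> snd b) \<and> f2_reduced (b # ys))"
| "f2_reduced _ = True"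

definition F2 :: "f2letter list monoid" where
  "F2 = \<lparr>carrier = {xs. f2_reduced xs}, mult = (\<lambda>xs ys. f2_red (xs @ ys)), one = []\<rparr>"

definition g1 :: "f2letter list" where "g1 = [(False, True)]"
definition g2 :: "f2letter list" where "g2 = [(True, True)]"

definition ZZ :: "(int \<times> int) monoid" where
  "ZZ = \<lparr>carrier = UNIV, mult = (\<lambda>a b. (fst a + fst b, snd a + snd b)), one = (0, 0)\<rparr>"

definition f2_ab :: "f2letter list \<Rightarrow> int \<times> int" where
  "f2_ab xs = (sum_list (map (\<lambda>(i, s). if \<not> i then (if s then 1 else -1) else 0) xs),
               sum_list (map (\<lambda>(i, s). if i then (if s then 1 else -1) else 0) xs))"

end

theory Submission
  imports Defs "HOL-Library.Poly_Mapping" "HOL-Library.Product_Plus"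
begin


lemma reduced_tl: "f2_reduced (a # L) \<Longrightarrow> f2_reduced L"
  by (cases L) auto

lemma push_reduced: "f2_reduced L \<Longrightarrow> f2_reduced (f2_push a L)"
  by (cases L) (auto dest: reduced_tl)

lemma red_reduced: "f2_reduced (f2_red xs)"
  unfolding f2_red_def by (induction xs) (auto intro: push_reduced)

lemma red_Cons: "f2_red (a # xs) = f2_push a (f2_red xs)"
  by (simp add: f2_red_def)

lemma red_id: "f2_reduced xs \<Longrightarrow> f2_red xs = xs"
proof (induction xs)
  case Nil then show ?case by (simp add: f2_red_def)
next
  case (Cons a xs)
  then have "f2_red xs = xs" using reduced_tl by blast
  with Cons.prems show ?case by (cases xs) (auto simp: red_Cons)
qed

lemma red_append: "f2_red (xs @ ys) = foldr f2_push xs (f2_red ys)"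
  by (simp add: f2_red_def)

lemma push_cancel:
  assumes "fst a = fst b" "snd a \<noteq> snd b" "f2_reduced X"
  shows "f2_push a (f2_push b X) = X"
proof (cases X)
  case Nil then show ?thesis using assms by auto
next
  case (Cons c X')
  show ?thesis
  proof (cases "fst b = fst c \<and> snd b \<noteq> snd c")
    case True
    then have ca: "c = a" using assms by (cases a, cases b, cases c) auto
    have "f2_push a X' = a # X'"
    proof (cases X')
      case (Cons d X'')
      then show ?thesis using assms(3) \<open>X = c # X'\<close> ca by auto
    qed simp
    then show ?thesis using Cons True ca by simp
  next
    case False
    then show ?thesis using Cons assms by auto
  qed
qed

lemma foldr_push_push:
  assumes "f2_reduced R" "f2_reduced L"
  shows "foldr f2_push (f2_push a R) L = f2_push a (foldr f2_push R L)"
proof (cases R)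
  case Nil then show ?thesis by simp
next
  case (Cons b R')
  show ?thesis
  proof (cases "fst a = fst b \<and> snd a \<noteq> snd b")
    case True
    have "f2_reduced (foldr f2_push R' L)"
      using assms(2) by (induction R') (auto intro: push_reduced)
    then show ?thesis using Cons True push_cancel[of a b] by simp
  next
    case False then show ?thesis using Cons by auto
  qed
qed

lemma foldr_red:
  assumes "f2_reduced L"
  shows "foldr f2_push (f2_red xs) L = foldr f2_push xs L"
proof (induction xs)
  case Nil then show ?case by (simp add: f2_red_def)
next
  case (Cons a xs)
  have "foldr f2_push (f2_red (a # xs)) L = foldr f2_push (f2_push a (f2_red xs)) L"
    by (simp add: red_Cons)
  also have "\<dots> = f2_push a (foldr f2_push (f2_red xs) L)"
    by (rule foldr_push_push[OF red_reduced assms])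
  finally show ?case using Cons by simp
qed

lemma red_red_left: "f2_red (f2_red A @ B) = f2_red (A @ B)"
  by (simp add: red_append foldr_red red_reduced)

lemma red_red_right: "f2_red (A @ f2_red B) = f2_red (A @ B)"
  by (simp add: red_append red_id red_reduced)

definition finv :: "f2letter list \<Rightarrow> f2letter list" where
  "finv xs = rev (map (\<lambda>(i, s). (i, \<not> s)) xs)"

lemma red_finv: "f2_red (finv xs @ xs) = []"
proof (induction xs)
  case Nil then show ?case by (simp add: finv_def f2_red_def)
next
  case (Cons a xs)
  obtain i s where a: "a = (i, s)" by force
  have "f2_red (finv (a # xs) @ a # xs) = foldr f2_push (finv xs) (f2_push (i, \<not> s) (f2_push a (f2_red xs)))"
    by (simp add: finv_def red_append red_Cons a)
  also have "\<dots> = foldr f2_push (finv xs) (f2_red xs)"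
    using push_cancel[of "(i, \<not> s)" a "f2_red xs"] red_reduced a by simp
  also have "\<dots> = []" using Cons by (simp add: red_append)
  finally show ?case .
qed

lemma finv_finv: "finv (finv xs) = xs"
  by (simp add: finv_def rev_map comp_def case_prod_beta)

lemma red_finv2: "f2_red (xs @ finv xs) = []"
  using red_finv[of "finv xs"] by (simp add: finv_finv)

typedef fw = "{xs. f2_reduced xs}"
  by (rule exI[of _ "[]"]) simp

setup_lifting type_definition_fw

instantiation fw :: group_add
begin
lift_definition zero_fw :: fw is "[]" by simp
lift_definition plus_fw :: "fw \<Rightarrow> fw \<Rightarrow> fw" is "\<lambda>x y. f2_red (x @ y)" by (rule red_reduced)
lift_definition uminus_fw :: "fw \<Rightarrow> fw" is "\<lambda>x. f2_red (finv x)" by (rule red_reduced)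
definition minus_fw :: "fw \<Rightarrow> fw \<Rightarrow> fw" where "minus_fw a b = a + - b"
instance
proof
  fix a b c :: fw
  show "a + b + c = a + (b + c)"
    by transfer (simp add: red_red_left red_red_right)
  show "0 + a = a" by transfer (simp add: red_id)
  show "a + 0 = a" by transfer (simp add: red_id)
  show "- a + a = 0" by transfer (simp add: red_red_left red_finv)
  show "a + - b = a - b" by (simp add: minus_fw_def)
qed
end

lemma ab_push: "f2_ab (f2_push a L) = f2_ab (a # L)"
  by (cases L) (auto simp: f2_ab_def split: prod.splits)

lemma ab_append: "f2_ab (xs @ ys) = f2_ab xs + f2_ab ys"
  by (simp add: f2_ab_def)

lemma ab_red: "f2_ab (f2_red xs) = f2_ab xs"
proof (induction xs)
  case Nil then show ?case by (simp add: f2_red_def)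
next
  case (Cons a xs)
  then show ?case using ab_append[of "[a]" xs] ab_append[of "[a]" "f2_red xs"]
    by (simp add: red_Cons ab_push)
qed

definition ab :: "fw \<Rightarrow> int \<times> int" where "ab w = f2_ab (Rep_fw w)"

lemma ab_plus: "ab (x + y) = ab x + ab y"
  unfolding ab_def by transfer (simp add: ab_red ab_append)

lemma F2_group: "group F2"
proof (rule groupI)
  fix x y z
  assume x: "x \<in> carrier F2" and y: "y \<in> carrier F2" and z: "z \<in> carrier F2"
  show "x \<otimes>\<^bsub>F2\<^esub> y \<in> carrier F2" by (simp add: F2_def red_reduced)
  show "x \<otimes>\<^bsub>F2\<^esub> y \<otimes>\<^bsub>F2\<^esub> z = x \<otimes>\<^bsub>F2\<^esub> (y \<otimes>\<^bsub>F2\<^esub> z)"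
    by (simp add: F2_def red_red_left red_red_right)
  show "\<one>\<^bsub>F2\<^esub> \<otimes>\<^bsub>F2\<^esub> x = x" using x by (simp add: F2_def red_id)
  show "\<exists>y\<in>carrier F2. y \<otimes>\<^bsub>F2\<^esub> x = \<one>\<^bsub>F2\<^esub>"
    by (rule bexI[of _ "f2_red (finv x)"]) (simp_all add: F2_def red_red_left red_finv red_reduced)
next
  show "\<one>\<^bsub>F2\<^esub> \<in> carrier F2" by (simp add: F2_def)
qed

lemma F2_carrier: "carrier F2 = {xs. f2_reduced xs}" by (simp add: F2_def)
lemma F2_mult: "x \<otimes>\<^bsub>F2\<^esub> y = f2_red (x @ y)" by (simp add: F2_def)

lemma F2_mult_Rep: "Rep_fw a \<otimes>\<^bsub>F2\<^esub> Rep_fw b = Rep_fw (a + b)"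
  by (simp add: F2_mult plus_fw.rep_eq)

lemma F2_inv_Rep: "inv\<^bsub>F2\<^esub> (Rep_fw a) = Rep_fw (- a)"
proof -
  interpret group F2 by (rule F2_group)
  show ?thesis
    apply (rule inv_equality)
      apply (simp add: F2_mult_Rep)
    using Rep_fw by (auto simp: F2_carrier zero_fw.rep_eq F2_def)
qed



type_synonym 'k R = "fw \<Rightarrow>\<^sub>0 'k"

abbreviation lk where "lk \<equiv> Poly_Mapping.lookup"
abbreviation sg where "sg \<equiv> Poly_Mapping.single"
abbreviation ks where "ks \<equiv> Poly_Mapping.keys"

definition Phi :: "(f2letter list \<Rightarrow> 'k::field) \<Rightarrow> 'k R" where
  "Phi f = Abs_poly_mapping (\<lambda>w. f (Rep_fw w))"

definition Psi :: "'k R \<Rightarrow> (f2letter list \<Rightarrow> 'k::field)" where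
  "Psi p = (\<lambda>x. if f2_reduced x then lk p (Abs_fw x) else 0)"

lemma galgD: "f \<in> galg G \<Longrightarrow> finite {x. f x \<noteq> 0}" "f \<in> galg G \<Longrightarrow> x \<notin> carrier G \<Longrightarrow> f x = 0"
  by (auto simp: galg_def)

lemma galg_F2_red: "f \<in> galg F2 \<Longrightarrow> f x \<noteq> 0 \<Longrightarrow> f2_reduced x"
  using galgD(2)[of f F2 x] by (auto simp: F2_carrier)

lemma lookup_Phi: assumes "f \<in> galg F2" shows "lk (Phi f) = (\<lambda>w. f (Rep_fw w))"
proof -
  have "finite (Rep_fw -` {x. f x \<noteq> 0})"
    by (rule finite_vimageI[OF galgD(1)[OF assms]]) (simp add: Rep_fw_inject inj_def)
  then have "finite {w. f (Rep_fw w) \<noteq> 0}" by (simp add: vimage_def)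
  then show ?thesis unfolding Phi_def by (simp add: Abs_poly_mapping_inverse)
qed

lemma Psi_galg: "Psi p \<in> galg F2"
proof -
  have "{x. Psi p x \<noteq> 0} \<subseteq> Rep_fw ` ks p"
  proof
    fix x assume "x \<in> {x. Psi p x \<noteq> 0}"
    then have "f2_reduced x" "lk p (Abs_fw x) \<noteq> 0" by (auto simp: Psi_def split: if_splits)
    then show "x \<in> Rep_fw ` ks p"
      by (metis Abs_fw_inverse image_eqI in_keys_iff mem_Collect_eq)
  qed
  then have "finite {x. Psi p x \<noteq> 0}" by (rule finite_subset) simp
  then show ?thesis by (auto simp: galg_def Psi_def F2_carrier)
qed

lemma Psi_Rep: "Psi p (Rep_fw w) = lk p w"
  using Rep_fw[of w] by (simp add: Psi_def Rep_fw_inverse)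

lemma Phi_Psi: "Phi (Psi p) = p"
  by (rule poly_mapping_eqI) (simp add: lookup_Phi[OF Psi_galg] Psi_Rep)

lemma Psi_Phi: assumes "f \<in> galg F2" shows "Psi (Phi f) = f"
proof
  fix x show "Psi (Phi f) x = f x"
    using galg_F2_red[OF assms, of x] by (auto simp: Psi_def lookup_Phi[OF assms] Abs_fw_inverse)
qed

lemma Phi_inj: "f \<in> galg F2 \<Longrightarrow> g \<in> galg F2 \<Longrightarrow> Phi f = Phi g \<Longrightarrow> f = g"
  by (metis Psi_Phi)

lemma galg_add: "f \<in> galg G \<Longrightarrow> g \<in> galg G \<Longrightarrow> (\<lambda>x. f x + g x) \<in> galg G"
  unfolding galg_def by (auto elim: finite_subset[rotated, OF finite_UnI])

lemma galg_neg: "f \<in> galg G \<Longrightarrow> (\<lambda>x. - f x) \<in> galg G"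
  unfolding galg_def by auto

lemma galg_scal: "f \<in> galg G \<Longrightarrow> (\<lambda>x. f x * c) \<in> galg G"
  unfolding galg_def by (auto elim: finite_subset[rotated])

lemma Phi_add: "f \<in> galg F2 \<Longrightarrow> g \<in> galg F2 \<Longrightarrow> Phi (\<lambda>x. f x + g x) = Phi f + Phi g"
  by (rule poly_mapping_eqI) (simp add: lookup_Phi galg_add lookup_add)

lemma Phi_neg: "f \<in> galg F2 \<Longrightarrow> Phi (\<lambda>x. - f x) = - Phi f"
  by (rule poly_mapping_eqI) (simp add: lookup_Phi galg_neg lookup_uminus)

definition C :: "'k::field \<Rightarrow> 'k R" where "C c = sg 0 c"

lemma Sum_any_when0: "(\<Sum>aa. (X aa when aa = 0) when (k::fw) = a + aa) = (X 0 when k = a)"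
proof -
  have "(\<Sum>aa. (X aa when aa = 0) when (k::fw) = a + aa) = (\<Sum>aa. (X aa when k = a) when aa = 0)"
    by (rule Sum_any.cong) (simp add: when_def)
  then show ?thesis by simp
qed

lemma Sum_any_when0': "(\<Sum>aa. (X aa when 0 = aa) when (k::fw) = a + aa) = (X 0 when k = a)"
proof -
  have "(\<Sum>aa. (X aa when 0 = aa) when (k::fw) = a + aa) = (\<Sum>aa. (X aa when k = a) when aa = 0)"
    by (rule Sum_any.cong) (auto simp add: when_def)
  then show ?thesis by simp
qed

lemma lookup_mult_C: "lk (p * C c) k = lk p k * c"
  by (simp add: C_def lookup_mult lookup_single mult_when when_mult Sum_any_right_distrib
      Sum_any_left_distrib Sum_any_when0 Sum_any_when0')

lemma lookup_C_mult: "lk (C c * p) k = c * lk p k"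
  by (simp add: C_def lookup_mult lookup_single mult_when when_mult Sum_any_right_distrib
      Sum_any_left_distrib)

lemma eq_add_iff: "((k::'a::group_add) = l + q) = (q = - l + k)"
  by (metis add_minus_cancel minus_add_cancel)

lemma lookup_mult_fw: "lk (p * q) (k::fw) = (\<Sum>l. lk p l * lk q (- l + k))"
proof -
  have "(\<Sum>qa. lk q qa when k = l + qa) = lk q (- l + k)" for l
  proof -
    have "(\<Sum>qa. lk q qa when k = l + qa) = (\<Sum>qa. lk q qa when qa = - l + k)"
      by (rule Sum_any.cong) (simp add: eq_add_iff[of k])
    then show ?thesis by simp
  qed
  then show ?thesis unfolding lookup_mult by simp
qed

lemma Rep_plus: "f2_reduced y \<Longrightarrow> f2_reduced z \<Longrightarrow> f2_red (y @ z) = Rep_fw (Abs_fw y + Abs_fw z)"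
  by (simp add: plus_fw.rep_eq Abs_fw_inverse)

lemma Psi_mult:
  assumes f: "f \<in> galg F2" and g: "g \<in> galg F2"
  shows "gmul F2 f g = Psi (Phi f * Phi g)"
proof
  fix x
  show "gmul F2 f g x = Psi (Phi f * Phi g) x"
  proof (cases "f2_reduced x")
    case False
    have emp: "{z. g z \<noteq> 0 \<and> y \<otimes>\<^bsub>F2\<^esub> z = x} = {}" if "f y \<noteq> 0" for y
      using galg_F2_red[OF g] galg_F2_red[OF f that] False red_reduced by (auto simp: F2_mult)
    have "gmul F2 f g x = 0" unfolding gmul_def
    proof (rule sum.neutral, rule ballI)
      fix y assume "y \<in> {y. f y \<noteq> 0}"
      then have fy: "f y \<noteq> 0" by simp
      show "(\<Sum>z\<in>{z. g z \<noteq> 0 \<and> y \<otimes>\<^bsub>F2\<^esub> z = x}. f y * g z) = 0" by (simp only: emp[OF fy] sum.empty)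
    qed
    then show ?thesis using False by (simp add: Psi_def)
  next
    case True
    define k where "k = Abs_fw x"
    have xk: "x = Rep_fw k" using True by (simp add: k_def Abs_fw_inverse)
    have fin: "finite {l. f (Rep_fw l) \<noteq> 0}"
      using finite_keys[of "Phi f"] by (simp add: Poly_Mapping.keys.rep_eq lookup_Phi[OF f])
    have "Psi (Phi f * Phi g) x = (\<Sum>l. f (Rep_fw l) * g (Rep_fw (- l + k)))"
      by (simp add: Psi_def True k_def lookup_mult_fw lookup_Phi f g)
    also have "\<dots> = (\<Sum>l\<in>{l. f (Rep_fw l) \<noteq> 0}. f (Rep_fw l) * g (Rep_fw (- l + k)))"
      by (rule Sum_any.expand_superset[OF fin]) auto
    also have "\<dots> = (\<Sum>y\<in>{y. f y \<noteq> 0}. f y * g (Rep_fw (- Abs_fw y + k)))"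
    proof -
      have "{y. f y \<noteq> 0} = Rep_fw ` {l. f (Rep_fw l) \<noteq> 0}"
      proof (intro equalityI subsetI)
        fix y assume "y \<in> {y. f y \<noteq> 0}"
        then have "f y \<noteq> 0" "f2_reduced y" using galg_F2_red[OF f] by auto
        then show "y \<in> Rep_fw ` {l. f (Rep_fw l) \<noteq> 0}"
          by (metis (mono_tags, lifting) Abs_fw_inverse image_eqI mem_Collect_eq)
      qed auto
      moreover have "inj_on Rep_fw A" for A by (simp add: inj_on_def Rep_fw_inject)
      ultimately show ?thesis by (simp add: sum.reindex Rep_fw_inverse)
    qed
    also have "\<dots> = gmul F2 f g x"
      unfolding gmul_def
    proof (rule sum.cong[OF refl])
      fix y assume "y \<in> {y. f y \<noteq> 0}"
      then have yr: "f2_reduced y" using galg_F2_red[OF f] by auto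
      define r where "r = Rep_fw (- Abs_fw y + k)"
      have sub: "{z. g z \<noteq> 0 \<and> y \<otimes>\<^bsub>F2\<^esub> z = x} \<subseteq> {r}"
      proof
        fix z assume z: "z \<in> {z. g z \<noteq> 0 \<and> y \<otimes>\<^bsub>F2\<^esub> z = x}"
        then have zr: "f2_reduced z" using galg_F2_red[OF g] by auto
        have "Rep_fw (Abs_fw y + Abs_fw z) = Rep_fw k" using z yr zr xk by (simp add: F2_mult Rep_plus)
        then have "Abs_fw y + Abs_fw z = k" by (simp add: Rep_fw_inject)
        then have "Abs_fw z = - Abs_fw y + k" by (metis eq_add_iff)
        then show "z \<in> {r}" using zr by (simp add: r_def[symmetric] Abs_fw_inverse[symmetric] ) (metis Abs_fw_inverse mem_Collect_eq r_def)
      qed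
      have rx: "y \<otimes>\<^bsub>F2\<^esub> r = x"
        using yr Rep_fw[of "- Abs_fw y + k"] by (simp add: F2_mult Rep_plus r_def Rep_fw_inverse xk Abs_fw_inverse add.assoc[symmetric])
      have "(\<Sum>z\<in>{z. g z \<noteq> 0 \<and> y \<otimes>\<^bsub>F2\<^esub> z = x}. f y * g z) = (\<Sum>z\<in>{r}. f y * g z)"
        by (rule sum.mono_neutral_left) (use sub rx in auto)
      then show "f y * g (Rep_fw (- Abs_fw y + k)) = (\<Sum>z\<in>{z. g z \<noteq> 0 \<and> y \<otimes>\<^bsub>F2\<^esub> z = x}. f y * g z)"
        by (simp add: r_def)
    qed
    finally show ?thesis by simp
  qed
qed

lemma gmul_galg: "f \<in> galg F2 \<Longrightarrow> g \<in> galg F2 \<Longrightarrow> gmul F2 f g \<in> galg F2"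
  by (simp add: Psi_mult Psi_galg)

lemma Phi_mult: "f \<in> galg F2 \<Longrightarrow> g \<in> galg F2 \<Longrightarrow> Phi (gmul F2 f g) = Phi f * Phi g"
  by (simp add: Psi_mult Phi_Psi)

definition star :: "'k::field R \<Rightarrow> 'k R" where
  "star p = Abs_poly_mapping (\<lambda>w. lk p (- w))"

lemma lookup_star: "lk (star p) w = lk p (- w)"
proof -
  have "{w. lk p (- w) \<noteq> 0} = uminus ` ks p"
  proof (intro equalityI subsetI)
    fix x assume "x \<in> {w. lk p (- w) \<noteq> 0}"
    then show "x \<in> uminus ` ks p" by (intro image_eqI[of _ _ "- x"]) (auto simp: in_keys_iff)
  qed (auto simp: in_keys_iff)
  then have "finite {w. lk p (- w) \<noteq> 0}" by simp
  then show ?thesis by (simp add: star_def Abs_poly_mapping_inverse)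
qed

lemma star_add: "star (p + q) = star p + star q"
  by (rule poly_mapping_eqI) (simp add: lookup_star lookup_add)
lemma star_neg: "star (- p) = - star p"
  by (rule poly_mapping_eqI) (simp add: lookup_star lookup_uminus)
lemma star_diff: "star (p - q) = star p - star q"
  by (rule poly_mapping_eqI) (simp add: lookup_star lookup_minus)
lemma star_zero: "star 0 = 0"
  by (rule poly_mapping_eqI) (simp add: lookup_star)
lemma star_star: "star (star p) = p"
  by (rule poly_mapping_eqI) (simp add: lookup_star)
lemma star_single: "star (sg w c) = sg (- w) c"
  by (rule poly_mapping_eqI) (auto simp add: lookup_star lookup_single when_def)
lemma star_C: "star (C c) = C c"
  by (simp add: C_def star_single)

lemma star_mult: "star (p * q) = star q * star p"
proof (rule poly_mapping_eqI)
  fix k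
  have "lk (star (p * q)) k = (\<Sum>l. lk p l * lk q (- l + - k))"
    by (simp add: lookup_star lookup_mult_fw)
  also have "\<dots> = (\<Sum>m. lk q (- m) * lk p (- k + m))"
  proof (rule Sum_any.reindex_cong[of "\<lambda>m. - k + m"])
    show "bij (\<lambda>m. - k + m)"
      by (rule bijI) (auto simp: inj_def image_iff intro!: exI[of _ "k + _"] simp: add.assoc[symmetric])
    show "(\<lambda>l. lk p l * lk q (- l + - k)) \<circ> (\<lambda>m. - k + m) = (\<lambda>m. lk q (- m) * lk p (- k + m))"
      by (auto simp: fun_eq_iff minus_add add.assoc mult.commute)
  qed
  also have "\<dots> = lk (star q * star p) k"
    by (simp add: lookup_star lookup_mult_fw minus_add)
  finally show "lk (star (p * q)) k = lk (star q * star p) k" .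
qed

lemma C_comm: "C c * p = p * C c"
  by (rule poly_mapping_eqI) (simp add: lookup_mult_C lookup_C_mult mult.commute)
lemma C_mult: "C a * C b = C (a * b)"
  by (simp add: C_def mult_single)
lemma C_add: "C a + C b = C (a + b)"
  by (simp add: C_def single_add)
lemma C_neg: "- C a = C (- a)"
  by (simp add: C_def single_uminus)
lemma C_one: "C 1 = 1"
  by (simp add: C_def)
lemma C_zero: "C 0 = 0"
  by (simp add: C_def)

lemma gstar_Rep: "gstar F2 f (Rep_fw w) = f (Rep_fw (- w))"
  using Rep_fw[of w] by (simp add: gstar_def F2_inv_Rep F2_carrier)

lemma gstar_galg: assumes "f \<in> galg F2" shows "gstar F2 f \<in> galg F2"
proof -
  have "gstar F2 f = Psi (star (Phi f))"
  proof
    fix x show "gstar F2 f x = Psi (star (Phi f)) x"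
      by (cases "f2_reduced x") (auto simp: Psi_def gstar_def F2_carrier lookup_star lookup_Phi[OF assms]
          F2_inv_Rep[symmetric] Abs_fw_inverse)
  qed
  then show ?thesis by (simp add: Psi_galg)
qed

lemma Phi_star: "f \<in> galg F2 \<Longrightarrow> Phi (gstar F2 f) = star (Phi f)"
  by (rule poly_mapping_eqI) (simp add: lookup_star lookup_Phi gstar_galg gstar_Rep)

lemma gdelta_galg: "f2_reduced x \<Longrightarrow> gdelta x \<in> galg F2"
  by (auto simp: galg_def gdelta_def F2_carrier)

lemma Phi_delta: "f2_reduced x \<Longrightarrow> Phi (gdelta x) = sg (Abs_fw x) 1"
  apply (rule poly_mapping_eqI)
  apply (subst lookup_Phi[OF gdelta_galg], assumption)
  apply (auto simp: lookup_single gdelta_def when_def Abs_fw_inverse Rep_fw_inverse)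
  done

lemma Phi_scal: "f \<in> galg F2 \<Longrightarrow> Phi (\<lambda>x. f x * c) = Phi f * C c"
  by (rule poly_mapping_eqI) (simp add: lookup_Phi galg_scal lookup_mult_C)

lemma gvec_galg: "f \<in> galg F2 \<Longrightarrow> gvec F2 f \<in> galg F2"
  using galg_scal[OF galg_add[OF _ galg_neg[OF gstar_galg]], of f f "1/2"]
  by (simp add: gvec_def diff_divide_distrib)

lemma Phi_gvec: assumes "f \<in> galg F2" shows "Phi (gvec F2 f) = (Phi f - star (Phi f)) * C (1/2)"
proof -
  have "gvec F2 f = (\<lambda>x. (\<lambda>x. f x + (\<lambda>x. - gstar F2 f x) x) x * (1/2))"
    by (simp add: gvec_def fun_eq_iff)
  then have "Phi (gvec F2 f) = (Phi f + - Phi (gstar F2 f)) * C (1/2)"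
    using assms by (simp only: Phi_scal galg_add galg_neg gstar_galg Phi_add Phi_neg)
  then show ?thesis using assms by (simp add: Phi_star)
qed

lemma glie_galg: "f \<in> galg F2 \<Longrightarrow> g \<in> galg F2 \<Longrightarrow> glie F2 f g \<in> galg F2"
  using galg_scal[OF galg_add[OF gmul_galg galg_neg[OF gmul_galg]], of f g g f "1/2"]
  by (simp add: glie_def diff_divide_distrib)

lemma Phi_glie: assumes "f \<in> galg F2" "g \<in> galg F2"
  shows "Phi (glie F2 f g) = (Phi f * Phi g - Phi g * Phi f) * C (1/2)"
proof -
  have "glie F2 f g = (\<lambda>x. (\<lambda>x. gmul F2 f g x + (\<lambda>x. - gmul F2 g f x) x) x * (1/2))"
    by (simp add: glie_def fun_eq_iff)
  then have "Phi (glie F2 f g) = (Phi (gmul F2 f g) + - Phi (gmul F2 g f)) * C (1/2)"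
    using assms by (simp only: Phi_scal galg_add galg_neg gmul_galg Phi_add Phi_neg)
  then show ?thesis using assms by (simp add: Phi_mult)
qed

lemma gdot_galg: "f \<in> galg F2 \<Longrightarrow> g \<in> galg F2 \<Longrightarrow> gdot F2 f g \<in> galg F2"
  using galg_scal[OF galg_neg[OF galg_add[OF gmul_galg gmul_galg]], of f g g f "1/2"]
  by (simp add: gdot_def)

lemma Phi_gdot: assumes "f \<in> galg F2" "g \<in> galg F2"
  shows "Phi (gdot F2 f g) = - (Phi f * Phi g + Phi g * Phi f) * C (1/2)"
proof -
  have "gdot F2 f g = (\<lambda>x. (\<lambda>x. - (\<lambda>x. gmul F2 f g x + gmul F2 g f x) x) x * (1/2))"
    by (simp add: gdot_def fun_eq_iff)
  then have "Phi (gdot F2 f g) = - (Phi (gmul F2 f g) + Phi (gmul F2 g f)) * C (1/2)"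
    using assms by (simp only: Phi_scal galg_add galg_neg gmul_galg Phi_add Phi_neg)
  then show ?thesis using assms by (simp add: Phi_mult)
qed



inductive_set Ir :: "'k::field R set" where
  gen: "star b = b \<Longrightarrow> a * b - b * a \<in> Ir"
| zero: "0 \<in> Ir"
| add: "u \<in> Ir \<Longrightarrow> v \<in> Ir \<Longrightarrow> u + v \<in> Ir"
| neg: "u \<in> Ir \<Longrightarrow> - u \<in> Ir"
| lmul: "u \<in> Ir \<Longrightarrow> a * u \<in> Ir"
| rmul: "u \<in> Ir \<Longrightarrow> u * a \<in> Ir"

definition Sr :: "'k::field R set" where "Sr = {p. star p - p \<in> Ir}"

inductive_set Jr :: "'k::field R \<Rightarrow> 'k R set" for c where
  gen: "c \<in> Jr c"
| zero: "0 \<in> Jr c"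
| add: "u \<in> Jr c \<Longrightarrow> v \<in> Jr c \<Longrightarrow> u + v \<in> Jr c"
| neg: "u \<in> Jr c \<Longrightarrow> - u \<in> Jr c"
| lmul: "r \<in> Sr \<Longrightarrow> u \<in> Jr c \<Longrightarrow> r * u \<in> Jr c"
| rmul: "r \<in> Sr \<Longrightarrow> u \<in> Jr c \<Longrightarrow> u * r \<in> Jr c"
| cls: "u \<in> Jr c \<Longrightarrow> w \<in> Ir \<Longrightarrow> u + w \<in> Jr c"

lemma galg_zero: "(\<lambda>x. 0) \<in> galg G" by (simp add: galg_def)

lemma galg_diff: "f \<in> galg G \<Longrightarrow> g \<in> galg G \<Longrightarrow> (\<lambda>x. f x - g x) \<in> galg G"
  using galg_add[OF _ galg_neg, of f G g] by simp

lemma Phi_zero: "Phi (\<lambda>x. 0) = 0"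
  by (rule poly_mapping_eqI) (simp add: lookup_Phi galg_zero)

lemma Phi_diff: "f \<in> galg F2 \<Longrightarrow> g \<in> galg F2 \<Longrightarrow> Phi (\<lambda>x. f x - g x) = Phi f - Phi g"
  using Phi_add[OF _ galg_neg, of f g] Phi_neg[of g] by simp

lemma Psi_eq: "f \<in> galg F2 \<Longrightarrow> Phi f = p \<Longrightarrow> Psi p = f"
  using Psi_Phi by blast

lemma Psi_zero: "Psi 0 = (\<lambda>x. 0)"
  by (rule Psi_eq[OF galg_zero Phi_zero])
lemma Psi_add: "Psi (p + q) = (\<lambda>x. Psi p x + Psi q x)"
  by (rule Psi_eq) (simp_all add: galg_add Psi_galg Phi_add Phi_Psi)
lemma Psi_neg: "Psi (- p) = (\<lambda>x. - Psi p x)"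
  by (rule Psi_eq) (simp_all add: galg_neg Psi_galg Phi_neg Phi_Psi)
lemma Psi_diff: "Psi (p - q) = (\<lambda>x. Psi p x - Psi q x)"
  by (rule Psi_eq) (simp_all add: galg_diff Psi_galg Phi_diff Phi_Psi)
lemma Psi_mul: "Psi (p * q) = gmul F2 (Psi p) (Psi q)"
  by (rule Psi_eq) (simp_all add: gmul_galg Psi_galg Phi_mult Phi_Psi)
lemma Psi_star: "Psi (star p) = gstar F2 (Psi p)"
  by (rule Psi_eq) (simp_all add: gstar_galg Psi_galg Phi_star Phi_Psi)

lemma CI1: "u \<in> comm_ideal F2 \<Longrightarrow> u \<in> galg F2 \<and> Phi u \<in> Ir"
proof (induction rule: comm_ideal.induct)
  case (gen a b)
  then show ?case
    by (simp add: galg_diff gmul_galg Phi_diff Phi_mult Ir.gen flip: Phi_star)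
next
  case zero then show ?case by (simp add: galg_zero Phi_zero Ir.zero)
next
  case (add u v) then show ?case by (simp add: galg_add Phi_add Ir.add)
next
  case (neg u) then show ?case by (simp add: galg_neg Phi_neg Ir.neg)
next
  case (lmul a u) then show ?case by (simp add: gmul_galg Phi_mult Ir.lmul)
next
  case (rmul a u) then show ?case by (simp add: gmul_galg Phi_mult Ir.rmul)
qed

lemma CI2: "p \<in> Ir \<Longrightarrow> Psi p \<in> comm_ideal F2"
proof (induction rule: Ir.induct)
  case (gen b a)
  have "gstar F2 (Psi b) = Psi b" using gen by (simp flip: Psi_star)
  then show ?case
    by (simp add: Psi_diff Psi_mul comm_ideal.gen Psi_galg)
next
  case zero then show ?case by (simp add: Psi_zero comm_ideal.zero)
next
  case (add u v) then show ?case by (simp add: Psi_add comm_ideal.add)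
next
  case (neg u) then show ?case by (simp add: Psi_neg comm_ideal.neg)
next
  case (lmul u a) then show ?case by (simp add: Psi_mul comm_ideal.lmul Psi_galg)
next
  case (rmul u a) then show ?case by (simp add: Psi_mul comm_ideal.rmul Psi_galg)
qed

lemma CI_iff: "u \<in> galg F2 \<Longrightarrow> u \<in> comm_ideal F2 \<longleftrightarrow> Phi u \<in> Ir"
  using CI1 CI2 Psi_Phi by metis

lemma SR_iff: "y \<in> sym_rep F2 \<longleftrightarrow> y \<in> galg F2 \<and> Phi y \<in> Sr"
  unfolding sym_rep_def Sr_def
  by (auto simp: CI_iff galg_diff gstar_galg Phi_diff Phi_star)

lemma Psi_Sr: "p \<in> Sr \<Longrightarrow> Psi p \<in> sym_rep F2"
  by (simp add: SR_iff Psi_galg Phi_Psi)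

lemma P1: assumes c: "c \<in> galg F2"
  shows "u \<in> pideal F2 c \<Longrightarrow> u \<in> galg F2 \<and> Phi u \<in> Jr (Phi c)"
proof (induction rule: pideal.induct)
  case gen then show ?case by (simp add: c Jr.gen)
next
  case zero then show ?case by (simp add: galg_zero Phi_zero Jr.zero)
next
  case (add u v) then show ?case by (simp add: galg_add Phi_add Jr.add)
next
  case (neg u) then show ?case by (simp add: galg_neg Phi_neg Jr.neg)
next
  case (lmul r u) then show ?case by (auto simp: gmul_galg Phi_mult SR_iff intro: Jr.lmul)
next
  case (rmul r u) then show ?case by (auto simp: gmul_galg Phi_mult SR_iff intro: Jr.rmul)
next
  case (cls u w) then show ?case using CI1[of w] by (auto simp: galg_add Phi_add intro: Jr.cls)
qed

lemma P2: assumes c: "c \<in> galg F2"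
  shows "p \<in> Jr (Phi c) \<Longrightarrow> Psi p \<in> pideal F2 c"
proof (induction rule: Jr.induct)
  case gen then show ?case by (simp add: c Psi_Phi pideal.gen)
next
  case zero then show ?case by (simp add: Psi_zero pideal.zero)
next
  case (add u v) then show ?case by (simp add: Psi_add pideal.add)
next
  case (neg u) then show ?case by (simp add: Psi_neg pideal.neg)
next
  case (lmul r u) then show ?case by (simp add: Psi_mul Psi_Sr pideal.lmul)
next
  case (rmul r u) then show ?case by (simp add: Psi_mul Psi_Sr pideal.rmul)
next
  case (cls u w) then show ?case by (simp add: Psi_add CI2 pideal.cls)
qed

definition epsf :: "'k::field R \<Rightarrow> int \<times> int \<Rightarrow> 'k" where
  "epsf p v = (\<Sum>w. lk p w when ab w = v)"

lemma gpush_eps: assumes y: "y \<in> galg F2" shows "gpush f2_ab y v = epsf (Phi y) v"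
proof -
  have fin: "finite {w. y (Rep_fw w) \<noteq> 0}"
    using finite_keys[of "Phi y"] by (simp add: Poly_Mapping.keys.rep_eq lookup_Phi[OF y])
  have "epsf (Phi y) v = (\<Sum>w\<in>{w. y (Rep_fw w) \<noteq> 0 \<and> ab w = v}. (y (Rep_fw w) when ab w = v))"
    unfolding epsf_def lookup_Phi[OF y]
    by (rule Sum_any.expand_superset) (auto intro: finite_subset[OF _ fin])
  also have "\<dots> = (\<Sum>w\<in>{w. y (Rep_fw w) \<noteq> 0 \<and> ab w = v}. y (Rep_fw w))"
    by (rule sum.cong) auto
  also have "\<dots> = (\<Sum>x\<in>{x. y x \<noteq> 0 \<and> f2_ab x = v}. y x)"
  proof -
    have "{x. y x \<noteq> 0 \<and> f2_ab x = v} = Rep_fw ` {w. y (Rep_fw w) \<noteq> 0 \<and> ab w = v}"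
    proof (intro equalityI subsetI)
      fix x assume "x \<in> {x. y x \<noteq> 0 \<and> f2_ab x = v}"
      then have "y x \<noteq> 0" "f2_ab x = v" "f2_reduced x" using galg_F2_red[OF y] by auto
      then show "x \<in> Rep_fw ` {w. y (Rep_fw w) \<noteq> 0 \<and> ab w = v}"
        by (intro image_eqI[of _ _ "Abs_fw x"]) (auto simp: Abs_fw_inverse ab_def)
    qed (auto simp: ab_def)
    moreover have "inj_on Rep_fw A" for A by (simp add: inj_on_def Rep_fw_inject)
    ultimately show ?thesis by (simp add: sum.reindex)
  qed
  finally show ?thesis by (simp add: gpush_def)
qed

lemma ZZ_comm: assumes a: "a \<in> galg ZZ" and b: "b \<in> galg ZZ"
  shows "gmul ZZ a b = gmul ZZ b a"
proof
  fix x
  have fa: "finite {y. a y \<noteq> 0}" and fb: "finite {y. b y \<noteq> 0}" using a b by (auto simp: galg_def)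
  have "gmul ZZ a b x = (\<Sum>y\<in>{y. a y \<noteq> 0}. \<Sum>z\<in>{z \<in> {z. b z \<noteq> 0}. y \<otimes>\<^bsub>ZZ\<^esub> z = x}. a y * b z)"
    by (simp add: gmul_def)
  also have "\<dots> = (\<Sum>z\<in>{z. b z \<noteq> 0}. \<Sum>y\<in>{y \<in> {y. a y \<noteq> 0}. y \<otimes>\<^bsub>ZZ\<^esub> z = x}. a y * b z)"
    by (rule sum.swap_restrict[OF fa fb])
  also have "\<dots> = gmul ZZ b a x"
    by (simp add: gmul_def ZZ_def mult.commute add.commute conj_commute)
  finally show "gmul ZZ a b x = gmul ZZ b a x" .
qed

lemma CZ: "u \<in> comm_ideal ZZ \<Longrightarrow> u = (\<lambda>x. 0)"
proof (induction rule: comm_ideal.induct)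
  case (gen a b) then show ?case by (simp add: ZZ_comm)
next
  case (lmul a u) then show ?case by (simp add: gmul_def)
next
  case (rmul a u) then show ?case by (simp add: gmul_def)
qed simp_all



lemma Ir_diff: "u \<in> Ir \<Longrightarrow> v \<in> Ir \<Longrightarrow> u - v \<in> Ir"
  using Ir.add[OF _ Ir.neg, of u v] by simp

lemma twice_half: "(x + x) * C (1/2::'k::field_char_0) = x"
proof -
  have "(x + x) * C (1/2::'k) = x * (C (1/2) + C (1/2))" by (simp add: algebra_simps)
  also have "\<dots> = x" by (simp add: C_add C_one)
  finally show ?thesis .
qed

lemma Ir_half: "x + x \<in> Ir \<Longrightarrow> (x::'k::field_char_0 R) \<in> Ir"
  using Ir.rmul[of "x + x" "C (1/2)"] by (simp add: twice_half)

lemma star_Ir: "u \<in> Ir \<Longrightarrow> star u \<in> Ir"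
proof (induction rule: Ir.induct)
  case (gen b a)
  have "star (a * b - b * a) = - (star a * b - b * star a)"
    using gen by (simp add: star_diff star_mult)
  then show ?case using Ir.neg[OF Ir.gen[OF gen]] by simp
next
  case zero then show ?case by (simp add: star_zero Ir.zero)
next
  case (add u v) then show ?case by (simp add: star_add Ir.add)
next
  case (neg u) then show ?case by (simp add: star_neg Ir.neg)
next
  case (lmul u a) then show ?case by (simp add: star_mult Ir.rmul)
next
  case (rmul u a) then show ?case by (simp add: star_mult Ir.lmul)
qed

lemma Sr_I: "star p = p \<Longrightarrow> p \<in> Sr"
  by (simp add: Sr_def Ir.zero)

lemma Sr_D: "p \<in> Sr \<Longrightarrow> star p - p \<in> Ir"
  by (simp add: Sr_def)

lemma central: assumes "(p::'k::field_char_0 R) \<in> Sr" shows "p * y - y * p \<in> Ir"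
proof -
  define s where "s = p + star p"
  define i where "i = star p - p"
  have ss: "star s = s" by (simp add: s_def star_add star_star add.commute)
  have i: "i \<in> Ir" using assms by (simp add: Sr_def i_def)
  have "(p * y - y * p) + (p * y - y * p) = - (y * s - s * y) + (y * i - i * y)"
    by (simp add: s_def i_def algebra_simps)
  also have "\<dots> \<in> Ir"
    by (intro Ir.add Ir.neg Ir.gen ss Ir_diff Ir.lmul Ir.rmul i)
  finally show ?thesis by (rule Ir_half)
qed

lemma central': "(p::'k::field_char_0 R) \<in> Sr \<Longrightarrow> y * p - p * y \<in> Ir"
  using Ir.neg[OF central[of p y]] by simp

lemma Ir_Sr: "u \<in> Ir \<Longrightarrow> u \<in> Sr"
  by (simp add: Sr_def Ir_diff star_Ir)

lemma Sr_add: "p \<in> Sr \<Longrightarrow> q \<in> Sr \<Longrightarrow> p + q \<in> Sr"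
  unfolding Sr_def using Ir.add[of "star p - p" "star q - q"] by (simp add: star_add algebra_simps)

lemma Sr_neg: "p \<in> Sr \<Longrightarrow> - p \<in> Sr"
  unfolding Sr_def using Ir.neg[of "star p - p"] by (simp add: star_neg algebra_simps)

lemma Sr_diff: "p \<in> Sr \<Longrightarrow> q \<in> Sr \<Longrightarrow> p - q \<in> Sr"
  using Sr_add[OF _ Sr_neg, of p q] by simp

lemma Sr_mult: assumes p: "(p::'k::field_char_0 R) \<in> Sr" and q: "q \<in> Sr" shows "p * q \<in> Sr"
proof -
  have "star (p * q) - p * q = (star q - q) * star p + q * (star p - p) + (q * p - p * q)"
    by (simp add: star_mult algebra_simps)
  also have "\<dots> \<in> Ir"
    by (intro Ir.add Ir.rmul Ir.lmul Sr_D p q central' central)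
  finally show ?thesis by (simp add: Sr_def)
qed

lemma Sr_C: "C c \<in> Sr" by (rule Sr_I) (simp add: star_C)

lemma Sr_one: "1 \<in> Sr" using Sr_C[of 1] by (simp add: C_one)

definition tau :: "'k::field R \<Rightarrow> 'k R" where "tau p = p + star p"

lemma tau_add: "tau (p + q) = tau p + tau q"
  by (simp add: tau_def star_add algebra_simps)
lemma tau_neg: "tau (- p) = - tau p"
  by (simp add: tau_def star_neg algebra_simps)
lemma tau_diff: "tau (p - q) = tau p - tau q"
  by (simp add: tau_def star_diff algebra_simps)
lemma tau_Ir: "u \<in> Ir \<Longrightarrow> tau u \<in> Ir"
  by (simp add: tau_def Ir.add star_Ir)
lemma tau_star: "star (tau p) = tau p"
  by (simp add: tau_def star_add star_star add.commute)
lemma tau_Sr: "tau p \<in> Sr" by (rule Sr_I[OF tau_star])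

lemma cyclic: "tau (p * q) - tau (q * p) \<in> Ir"
proof -
  have "tau (p * q) - tau (q * p) = (p * tau q - tau q * p) + (star q * tau p - tau p * star q)"
    by (simp add: tau_def star_mult algebra_simps)
  also have "\<dots> \<in> Ir" by (intro Ir.add Ir.gen tau_star)
  finally show ?thesis .
qed

lemma L1: assumes "(b::'k::field_char_0 R) \<in> Sr" shows "tau (X * b) - b * tau X \<in> Ir"
proof -
  have "tau (X * b) - b * tau X = (X * b - b * X) + (star b - b) * star X"
    by (simp add: tau_def star_mult algebra_simps)
  also have "\<dots> \<in> Ir" by (intro Ir.add Ir.rmul Sr_D assms central')
  finally show ?thesis .
qed

lemma L2: assumes "(b::'k::field_char_0 R) \<in> Sr" shows "X * b * Y - X * Y * b \<in> Ir"
proof -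
  have "X * b * Y - X * Y * b = X * (b * Y - Y * b)" by (simp add: algebra_simps)
  also have "\<dots> \<in> Ir" by (intro Ir.lmul central assms)
  finally show ?thesis .
qed

lemma Jr_Ir: "w \<in> Ir \<Longrightarrow> w \<in> Jr c"
  using Jr.cls[OF Jr.zero, of w c] by simp

lemma Jr_diff: "u \<in> Jr c \<Longrightarrow> v \<in> Jr c \<Longrightarrow> u - v \<in> Jr c"
  using Jr.add[OF _ Jr.neg, of u c v] by simp

lemma Jr_addI: "u \<in> Jr c \<Longrightarrow> w \<in> Ir \<Longrightarrow> w + u \<in> Jr c"
  using Jr.cls[of u c w] by (simp add: add.commute)

lemma Jr_sum: "finite A \<Longrightarrow> (\<And>i. i \<in> A \<Longrightarrow> f i \<in> Jr c) \<Longrightarrow> sum f A \<in> Jr c"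
  by (induction A rule: finite_induct) (auto intro: Jr.zero Jr.add)

lemma Jr_Sr: assumes "(c::'k::field_char_0 R) \<in> Sr" shows "u \<in> Jr c \<Longrightarrow> u \<in> Sr"
proof (induction rule: Jr.induct)
  case gen then show ?case by (rule assms)
next
  case zero then show ?case by (rule Sr_I) (simp add: star_zero)
qed (auto intro: Sr_add Sr_neg Sr_mult Ir_Sr)



definition dl :: "fw \<Rightarrow> 'k::field R" where "dl w = sg w 1"
definition g1w :: fw where "g1w = Abs_fw g1"
definition g2w :: fw where "g2w = Abs_fw g2"
definition hh :: "'k::field_char_0 R" where "hh = C (1/2)"
definition uu :: "'k::field_char_0 R" where "uu = (dl g1w - dl (- g1w)) * hh"
definition vv :: "'k::field_char_0 R" where "vv = (dl g2w - dl (- g2w)) * hh"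
definition sa :: "'k::field_char_0 R" where "sa = (dl g1w + dl (- g1w)) * hh"
definition sb :: "'k::field_char_0 R" where "sb = (dl g2w + dl (- g2w)) * hh"
definition WW :: "'k::field_char_0 R" where "WW = uu * vv - vv * uu"

lemma dl_plus: "dl (x + y) = dl x * dl y"
  by (simp add: dl_def mult_single)
lemma dl_zero: "dl 0 = 1" by (simp add: dl_def)
lemma star_dl: "star (dl w) = dl (- w)"
  by (simp add: dl_def star_single)
lemma star_hh: "star hh = hh" by (simp add: hh_def star_C)
lemma hh_comm: "hh * x = x * hh" by (simp add: hh_def C_comm)

lemma star_uu: "star uu = - uu"
proof -
  have "star uu = hh * (dl (- g1w) - dl g1w)" by (simp add: uu_def star_mult star_diff star_dl star_hh)
  also have "\<dots> = - uu" by (simp add: uu_def hh_comm algebra_simps)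
  finally show ?thesis .
qed
lemma star_vv: "star vv = - vv"
proof -
  have "star vv = hh * (dl (- g2w) - dl g2w)" by (simp add: vv_def star_mult star_diff star_dl star_hh)
  also have "\<dots> = - vv" by (simp add: vv_def hh_comm algebra_simps)
  finally show ?thesis .
qed
lemma star_sa: "star sa = sa"
proof -
  have "star sa = hh * (dl (- g1w) + dl g1w)" by (simp add: sa_def star_mult star_add star_dl star_hh)
  also have "\<dots> = sa" by (simp add: sa_def hh_comm algebra_simps)
  finally show ?thesis .
qed
lemma star_sb: "star sb = sb"
proof -
  have "star sb = hh * (dl (- g2w) + dl g2w)" by (simp add: sb_def star_mult star_add star_dl star_hh)
  also have "\<dots> = sb" by (simp add: sb_def hh_comm algebra_simps)
  finally show ?thesis .
qed

lemma sa_Sr: "sa \<in> Sr" by (rule Sr_I[OF star_sa])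
lemma sb_Sr: "sb \<in> Sr" by (rule Sr_I[OF star_sb])

lemma a_eq: "dl g1w = sa + uu" "dl (- g1w) = sa - uu"
proof -
  have "sa + uu = (dl g1w + dl g1w) * hh" by (simp add: sa_def uu_def algebra_simps)
  then have "sa + uu = dl g1w" by (simp add: hh_def twice_half)
  then show "dl g1w = sa + uu" by (rule sym)
  have "sa - uu = (dl (- g1w) + dl (- g1w)) * hh" by (simp add: sa_def uu_def algebra_simps)
  then have "sa - uu = dl (- g1w)" by (simp add: hh_def twice_half)
  then show "dl (- g1w) = sa - uu" by (rule sym)
qed
lemma b_eq: "dl g2w = sb + vv" "dl (- g2w) = sb - vv"
proof -
  have "sb + vv = (dl g2w + dl g2w) * hh" by (simp add: sb_def vv_def algebra_simps)
  then have "sb + vv = dl g2w" by (simp add: hh_def twice_half)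
  then show "dl g2w = sb + vv" by (rule sym)
  have "sb - vv = (dl (- g2w) + dl (- g2w)) * hh" by (simp add: sb_def vv_def algebra_simps)
  then have "sb - vv = dl (- g2w)" by (simp add: hh_def twice_half)
  then show "dl (- g2w) = sb - vv" by (rule sym)
qed

lemma star_WW: "star WW = - WW"
  by (simp add: WW_def star_diff star_mult star_uu star_vv)

lemma uu2_Sr: "uu * uu \<in> Sr" by (rule Sr_I) (simp add: star_mult star_uu)
lemma vv2_Sr: "vv * vv \<in> Sr" by (rule Sr_I) (simp add: star_mult star_vv)
lemma t_Sr: "uu * vv + vv * uu \<in> Sr" by (rule Sr_I) (simp add: star_mult star_add star_uu star_vv add.commute)

definition MM :: "'k::field_char_0 R \<Rightarrow> bool" where
  "MM p \<longleftrightarrow> (\<exists>\<alpha> \<beta> \<gamma> \<delta>. \<alpha> \<in> Sr \<and> \<beta> \<in> Sr \<and> \<gamma> \<in> Sr \<and> \<delta> \<in> Sr \<and>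
     p - (\<alpha> + \<beta> * uu + \<gamma> * vv + \<delta> * (uu * vv)) \<in> Ir)"

lemma MM_one: "MM 1"
  unfolding MM_def by (rule exI[of _ 1], rule exI[of _ 0], rule exI[of _ 0], rule exI[of _ 0])
    (simp add: Sr_one Ir.zero Ir_Sr)

lemma MM_add: assumes "MM p" "MM q" shows "MM (p + q)"
proof -
  obtain a1 b1 c1 d1 where 1: "a1 \<in> Sr" "b1 \<in> Sr" "c1 \<in> Sr" "d1 \<in> Sr"
    "p - (a1 + b1 * uu + c1 * vv + d1 * (uu * vv)) \<in> Ir" using assms(1) MM_def by blast
  obtain a2 b2 c2 d2 where 2: "a2 \<in> Sr" "b2 \<in> Sr" "c2 \<in> Sr" "d2 \<in> Sr"
    "q - (a2 + b2 * uu + c2 * vv + d2 * (uu * vv)) \<in> Ir" using assms(2) MM_def by blast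
  have "(p + q) - ((a1 + a2) + (b1 + b2) * uu + (c1 + c2) * vv + (d1 + d2) * (uu * vv)) =
    (p - (a1 + b1 * uu + c1 * vv + d1 * (uu * vv))) + (q - (a2 + b2 * uu + c2 * vv + d2 * (uu * vv)))"
    by (simp add: algebra_simps)
  then show ?thesis unfolding MM_def using 1 2 by (metis Ir.add Sr_add)
qed

lemma MM_neg: assumes "MM p" shows "MM (- p)"
proof -
  obtain a1 b1 c1 d1 where 1: "a1 \<in> Sr" "b1 \<in> Sr" "c1 \<in> Sr" "d1 \<in> Sr"
    "p - (a1 + b1 * uu + c1 * vv + d1 * (uu * vv)) \<in> Ir" using assms(1) MM_def by blast
  have "(- p) - ((- a1) + (- b1) * uu + (- c1) * vv + (- d1) * (uu * vv)) =
    - (p - (a1 + b1 * uu + c1 * vv + d1 * (uu * vv)))"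
    by (simp add: algebra_simps)
  then show ?thesis unfolding MM_def using 1 by (metis Ir.neg Sr_neg)
qed

lemma MM_mul_S: assumes "MM p" "s \<in> Sr" shows "MM (p * s)"
proof -
  obtain a b c d where 1: "a \<in> Sr" "b \<in> Sr" "c \<in> Sr" "d \<in> Sr"
    "p - (a + b * uu + c * vv + d * (uu * vv)) \<in> Ir" using assms(1) MM_def by blast
  have "p * s - (a * s + (b * s) * uu + (c * s) * vv + (d * s) * (uu * vv)) =
    (p - (a + b * uu + c * vv + d * (uu * vv))) * s + b * (uu * s - s * uu) + c * (vv * s - s * vv)
     + d * (uu * vv * s - s * (uu * vv))"
    by (simp add: algebra_simps)
  also have "\<dots> \<in> Ir"
    by (intro Ir.add Ir.rmul Ir.lmul 1 central' assms(2))
  finally have "p * s - (a * s + (b * s) * uu + (c * s) * vv + (d * s) * (uu * vv)) \<in> Ir" .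
  moreover have "a * s \<in> Sr" "b * s \<in> Sr" "c * s \<in> Sr" "d * s \<in> Sr"
    using 1 assms(2) by (simp_all add: Sr_mult)
  ultimately show ?thesis unfolding MM_def by blast
qed

lemma MM_mul_u: fixes p :: "'k::field_char_0 R" assumes "MM p" shows "MM (p * uu)"
proof -
  obtain a b c d where 1: "a \<in> Sr" "b \<in> Sr" "c \<in> Sr" "d \<in> Sr"
    "p - (a + b * uu + c * vv + d * (uu * vv)) \<in> Ir" using assms(1) MM_def by blast
  define t :: "'k R" where "t = uu * vv + vv * uu"
  define m :: "'k R" where "m = uu * uu"
  have "p * uu - ((b * m + c * t) + (a + d * t) * uu + (- (d * m)) * vv + (- c) * (uu * vv)) =
    (p - (a + b * uu + c * vv + d * (uu * vv))) * uu + d * (m * vv - vv * m)"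
    by (simp add: t_def m_def algebra_simps)
  also have "\<dots> \<in> Ir"
    by (intro Ir.add Ir.rmul Ir.lmul 1 central) (simp add: m_def uu2_Sr)
  finally have "p * uu - ((b * m + c * t) + (a + d * t) * uu + (- (d * m)) * vv + (- c) * (uu * vv)) \<in> Ir" .
  moreover have "b * m + c * t \<in> Sr" "a + d * t \<in> Sr" "- (d * m) \<in> Sr" "- c \<in> Sr"
  proof -
    have mS: "m \<in> Sr" unfolding m_def by (rule uu2_Sr)
    have tS: "t \<in> Sr" unfolding t_def by (rule t_Sr)
    show "b * m + c * t \<in> Sr" "a + d * t \<in> Sr" "- (d * m) \<in> Sr" "- c \<in> Sr"
      using 1 mS tS by (auto intro!: Sr_mult Sr_add Sr_neg)
  qed
  ultimately show ?thesis unfolding MM_def by blast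
qed

lemma MM_mul_v: fixes p :: "'k::field_char_0 R" assumes "MM p" shows "MM (p * vv)"
proof -
  obtain a b c d where 1: "a \<in> Sr" "b \<in> Sr" "c \<in> Sr" "d \<in> Sr"
    "p - (a + b * uu + c * vv + d * (uu * vv)) \<in> Ir" using assms(1) MM_def by blast
  define n :: "'k R" where "n = vv * vv"
  have "p * vv - ((c * n) + (d * n) * uu + a * vv + b * (uu * vv)) =
    (p - (a + b * uu + c * vv + d * (uu * vv))) * vv + d * (uu * n - n * uu)"
    by (simp add: n_def algebra_simps)
  also have "\<dots> \<in> Ir"
    by (intro Ir.add Ir.rmul Ir.lmul 1 central') (simp add: n_def vv2_Sr)
  finally have "p * vv - ((c * n) + (d * n) * uu + a * vv + b * (uu * vv)) \<in> Ir" .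
  moreover have "c * n \<in> Sr" "d * n \<in> Sr"
  proof -
    have nS: "n \<in> Sr" unfolding n_def by (rule vv2_Sr)
    show "c * n \<in> Sr" "d * n \<in> Sr" using 1 nS by (auto intro!: Sr_mult)
  qed
  ultimately show ?thesis unfolding MM_def using 1 by blast
qed

lemma MM_diff: "MM p \<Longrightarrow> MM q \<Longrightarrow> MM (p - q)"
  using MM_add[OF _ MM_neg, of p q] by simp

lemma MM_letters: assumes "MM p"
  shows "MM (p * dl g1w)" "MM (p * dl (- g1w))" "MM (p * dl g2w)" "MM (p * dl (- g2w))"
proof -
  have "p * dl g1w = p * sa + p * uu" by (simp add: a_eq distrib_left)
  then show "MM (p * dl g1w)" using assms by (simp add: MM_add MM_mul_S MM_mul_u sa_Sr)
  have "p * dl (- g1w) = p * sa - p * uu" by (simp add: a_eq right_diff_distrib)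
  then show "MM (p * dl (- g1w))" using assms by (simp add: MM_diff MM_mul_S MM_mul_u sa_Sr)
  have "p * dl g2w = p * sb + p * vv" by (simp add: b_eq distrib_left)
  then show "MM (p * dl g2w)" using assms by (simp add: MM_add MM_mul_S MM_mul_v sb_Sr)
  have "p * dl (- g2w) = p * sb - p * vv" by (simp add: b_eq right_diff_distrib)
  then show "MM (p * dl (- g2w))" using assms by (simp add: MM_diff MM_mul_S MM_mul_v sb_Sr)
qed



definition LL :: "'k::field_char_0 R" where "LL = WW * hh"
definition cR :: "'k::field_char_0 R" where "cR = - (LL * LL + LL * LL) * hh"

lemma Jr_of: "A - B \<in> Ir \<Longrightarrow> B \<in> Jr c \<Longrightarrow> A \<in> Jr c"
  using Jr_addI[of B c "A - B"] by simp

lemma Ir_of: "A - B \<in> Ir \<Longrightarrow> B \<in> Ir \<Longrightarrow> A \<in> Ir"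
  using Ir.add[of "A - B" B] by simp

lemma cR_WW: "cR = WW * WW * C (- 1/4)"
proof -
  have 1: "LL * LL = WW * WW * (hh * hh)"
    by (simp add: LL_def mult.assoc hh_comm[of "WW * hh"])
  have "cR = - (WW * WW) * ((hh * hh + hh * hh) * hh)"
    by (simp add: cR_def 1 algebra_simps)
  also have "(hh * hh + hh * hh) * hh = (C (1/4) :: 'a R)"
    by (simp add: hh_def C_mult C_add)
  finally show ?thesis by (simp add: C_neg[symmetric])
qed

lemma WW2_J: "WW * WW \<in> Jr (cR :: 'k::field_char_0 R)"
proof -
  have "cR * C (- 4) = WW * WW * (C (- 1/4) * C (- 4) :: 'k R)" by (simp add: cR_WW mult.assoc)
  also have "\<dots> = WW * WW" by (simp add: C_mult C_one)
  finally show ?thesis using Jr.rmul[OF Sr_C[of "- 4 :: 'k"] Jr.gen[of "cR :: 'k R"]] by simp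
qed

lemma tau_WW: "tau WW = 0"
  by (simp add: tau_def star_WW)

lemma T_u: "tau (WW * uu) \<in> Ir"
proof -
  have "tau (WW * uu) = (uu * uu) * vv - vv * (uu * uu)"
    by (simp add: tau_def star_mult star_uu star_WW) (simp add: WW_def algebra_simps)
  also have "\<dots> \<in> Ir" by (rule central[OF uu2_Sr])
  finally show ?thesis .
qed

lemma T_v: "tau (WW * vv) \<in> Ir"
proof -
  have "tau (WW * vv) = uu * (vv * vv) - (vv * vv) * uu"
    by (simp add: tau_def star_mult star_vv star_WW) (simp add: WW_def algebra_simps)
  also have "\<dots> \<in> Ir" by (rule central'[OF vv2_Sr])
  finally show ?thesis .
qed

lemma T_uv: "tau (WW * (uu * vv)) \<in> Jr cR"
proof -
  have "(tau (WW * (uu * vv)) - WW * WW) + (tau (WW * (uu * vv)) - WW * WW) =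
     WW * (uu * vv + vv * uu) - (uu * vv + vv * uu) * WW"
    by (simp add: tau_def star_mult star_vv star_uu star_WW) (simp add: WW_def algebra_simps)
  also have "\<dots> \<in> Ir" by (rule central'[OF t_Sr])
  finally have "tau (WW * (uu * vv)) - WW * WW \<in> Ir" by (rule Ir_half)
  then show ?thesis using WW2_J by (rule Jr_of)
qed

lemma T_gen:
  assumes b: "b \<in> Sr" and T: "tau (WW * Y) \<in> Jr (cR :: 'k::field_char_0 R)"
  shows "tau (WW * (b * Y)) \<in> Jr cR"
proof -
  have 1: "tau (WW * (b * Y)) - tau (WW * Y * b) \<in> Ir"
    using tau_Ir[OF L2[OF b, of WW Y]] by (simp add: tau_diff mult.assoc)
  have 2: "tau (WW * Y * b) - b * tau (WW * Y) \<in> Ir" by (rule L1[OF b])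
  have "b * tau (WW * Y) \<in> Jr cR" by (rule Jr.lmul[OF b T])
  then have "tau (WW * Y * b) \<in> Jr cR" using 2 by (rule Jr_of[rotated])
  then show ?thesis using 1 by (rule Jr_of[rotated])
qed

lemma K2: assumes "MM p" shows "tau (WW * p) \<in> Jr (cR :: 'k::field_char_0 R)"
proof -
  obtain a b c d where 1: "a \<in> Sr" "b \<in> Sr" "c \<in> Sr" "d \<in> Sr"
    and i: "p - (a + b * uu + c * vv + d * (uu * vv)) \<in> Ir" using assms MM_def by blast
  define i' where "i' = p - (a + b * uu + c * vv + d * (uu * vv))"
  have "tau (WW * p) = tau (WW * (a * 1)) + tau (WW * (b * uu)) + tau (WW * (c * vv)) + tau (WW * (d * (uu * vv)))
      + tau (WW * i')"
    by (simp add: i'_def tau_add[symmetric] algebra_simps)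
  also have "\<dots> \<in> Jr cR"
  proof (intro Jr.add)
    show "tau (WW * (a * 1)) \<in> Jr cR"
      by (rule T_gen[OF 1(1)]) (simp add: tau_WW Jr.zero)
    show "tau (WW * (b * uu)) \<in> Jr cR" by (rule T_gen[OF 1(2) Jr_Ir[OF T_u]])
    show "tau (WW * (c * vv)) \<in> Jr cR" by (rule T_gen[OF 1(3) Jr_Ir[OF T_v]])
    show "tau (WW * (d * (uu * vv))) \<in> Jr cR" by (rule T_gen[OF 1(4) T_uv])
    show "tau (WW * i') \<in> Jr cR" using i by (simp add: i'_def Jr_Ir tau_Ir Ir.lmul)
  qed
  finally show ?thesis .
qed



definition lt :: "f2letter \<Rightarrow> fw" where "lt l = Abs_fw [l]"

lemma Rep_lt: "Rep_fw (lt l) = [l]"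
  by (simp add: lt_def Abs_fw_inverse)

definition sumL :: "f2letter list \<Rightarrow> fw" where "sumL L = foldr (\<lambda>l acc. lt l + acc) L 0"

lemma sumL_simps: "sumL [] = 0" "sumL (l # L) = lt l + sumL L"
  by (simp_all add: sumL_def)

lemma Rep_sumL: "Rep_fw (sumL L) = f2_red L"
proof (induction L)
  case Nil then show ?case by (simp add: sumL_simps zero_fw.rep_eq f2_red_def)
next
  case (Cons l L)
  then show ?case using red_red_right[of "[l]" L]
    by (simp add: sumL_simps plus_fw.rep_eq Rep_lt)
qed

lemma sumL_Rep: "sumL (Rep_fw m) = m"
  using Rep_fw[of m] by (simp add: Rep_fw_inject[symmetric] Rep_sumL red_id)

lemma sumL_append: "sumL (xs @ ys) = sumL xs + sumL ys"
  by (induction xs) (simp_all add: sumL_simps add.assoc)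

lemma lt_vals: "lt (False, True) = g1w" "lt (False, False) = - g1w"
  "lt (True, True) = g2w" "lt (True, False) = - g2w"
proof -
  show "lt (False, True) = g1w" by (simp add: lt_def g1w_def g1_def)
  show "lt (True, True) = g2w" by (simp add: lt_def g2w_def g2_def)
  have "Rep_fw (- g1w) = [(False, False)]"
    by (simp add: uminus_fw.rep_eq g1w_def g1_def Abs_fw_inverse finv_def f2_red_def)
  then show "lt (False, False) = - g1w" by (simp add: Rep_fw_inject[symmetric] Rep_lt)
  have "Rep_fw (- g2w) = [(True, False)]"
    by (simp add: uminus_fw.rep_eq g2w_def g2_def Abs_fw_inverse finv_def f2_red_def)
  then show "lt (True, False) = - g2w" by (simp add: Rep_fw_inject[symmetric] Rep_lt)
qed

lemma MM_dl: "MM (dl m :: 'k::field_char_0 R)"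
proof -
  have "MM (dl (sumL L) :: 'k R)" for L
  proof (induction L rule: rev_induct)
    case Nil then show ?case by (simp add: sumL_simps dl_zero MM_one)
  next
    case (snoc l L)
    obtain i s where l: "l = (i, s)" by force
    have "dl (sumL (L @ [l])) = (dl (sumL L) :: 'k R) * dl (lt l)"
      by (simp add: sumL_append sumL_simps dl_plus)
    then show ?case using MM_letters[OF snoc.IH] l
      by (cases i; cases s) (simp_all add: lt_vals)
  qed
  then show ?thesis using sumL_Rep[of m] by metis
qed

primrec npow :: "fw \<Rightarrow> nat \<Rightarrow> fw" where
  "npow x 0 = 0" | "npow x (Suc n) = x + npow x n"

definition gpow :: "fw \<Rightarrow> int \<Rightarrow> fw" where
  "gpow x i = (if 0 \<le> i then npow x (nat i) else npow (- x) (nat (- i)))"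

lemma gpow_zero: "gpow x 0 = 0" by (simp add: gpow_def)

lemma gpow_succ: "gpow x (i + 1) = x + gpow x i"
proof (cases "0 \<le> i")
  case True
  then have "nat (i + 1) = Suc (nat i)" by simp
  then show ?thesis using True by (simp add: gpow_def)
next
  case False
  show ?thesis
  proof (cases "i = -1")
    case True then show ?thesis by (simp add: gpow_def)
  next
    case F: False
    then have "nat (- i) = Suc (nat (- (i + 1)))" using False by simp
    then show ?thesis using False F by (simp add: gpow_def add.assoc[symmetric])
  qed
qed

lemma gpow_pred: "gpow x (i - 1) = - x + gpow x i"
  using gpow_succ[of x "i - 1"] by (simp add: minus_add_cancel)

lemma gpow_succ': "gpow x (1 + i) = x + gpow x i"
  using gpow_succ[of x i] by (simp add: add.commute)

lemma gpow_pred': "gpow x (- 1 + i) = - x + gpow x i"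
  using gpow_pred[of x i] by simp

definition NN :: "int \<times> int \<Rightarrow> fw" where "NN v = gpow g1w (fst v) + gpow g2w (snd v)"

definition TT :: "fw \<Rightarrow> 'k::field_char_0 R" where "TT w = tau (dl w)"

lemma D_lem:
  assumes x: "x = g1w \<or> x = - g1w" and y: "y = g2w \<or> y = - g2w"
  shows "(dl y * dl x - dl x * dl y) - (WW :: 'k::field_char_0 R) \<in> Ir \<or> (dl y * dl x - dl x * dl y) + (WW :: 'k::field_char_0 R) \<in> Ir"
proof -
  have "\<exists>s1 :: 'k R. dl x = sa + s1 \<and> (s1 = uu \<or> s1 = - uu)"
    using x a_eq by (metis diff_conv_add_uminus)
  then obtain s1 :: "'k R" where s1: "dl x = sa + s1" "s1 = uu \<or> s1 = - uu" by blast
  have "\<exists>s2 :: 'k R. dl y = sb + s2 \<and> (s2 = vv \<or> s2 = - vv)"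
    using y b_eq by (metis diff_conv_add_uminus)
  then obtain s2 :: "'k R" where s2: "dl y = sb + s2" "s2 = vv \<or> s2 = - vv" by blast
  define E where "E = s2 * s1 - s1 * s2"
  have "(dl y * dl x - dl x * dl y) - E = (sb * sa - sa * sb) + (sb * s1 - s1 * sb) + (s2 * sa - sa * s2)"
    by (simp add: s1(1) s2(1) E_def algebra_simps)
  also have "\<dots> \<in> Ir" by (intro Ir.add central central' sa_Sr sb_Sr)
  finally have DE: "(dl y * dl x - dl x * dl y) - E \<in> Ir" .
  have "E = - WW \<or> E = WW" using s1(2) s2(2) by (auto simp: E_def WW_def algebra_simps)
  then show ?thesis
  proof
    assume "E = - WW" then show ?thesis using DE by simp
  next
    assume "E = WW" then have "(dl y * dl x - dl x * dl y) - (WW :: 'k R) \<in> Ir" using DE by simp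
    then show ?thesis by blast
  qed
qed

lemma Jr_trans: "A - B \<in> Jr c \<Longrightarrow> B - D \<in> Jr c \<Longrightarrow> A - D \<in> Jr c"
  using Jr.add[of "A - B" c "B - D"] by simp

lemma SWAP:
  assumes x: "x = g1w \<or> x = - g1w" and y: "y = g2w \<or> y = - g2w"
  shows "TT (P + y + x + Q) - TT (P + x + y + Q) \<in> Jr (cR :: 'k::field_char_0 R)"
proof -
  define D :: "'k R" where "D = dl y * dl x - dl x * dl y"
  define Z :: "'k R" where "Z = dl (Q + P)"
  have "TT (P + y + x + Q) - TT (P + x + y + Q) = tau (dl P * (D * dl Q))"
    by (simp add: TT_def dl_plus D_def tau_diff[symmetric] algebra_simps)
  moreover have "tau (dl P * (D * dl Q)) - tau (D * Z) \<in> Ir"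
    using cyclic[of "dl P" "D * dl Q"] by (simp add: Z_def dl_plus mult.assoc)
  moreover have "tau (D * Z) \<in> Jr cR"
  proof -
    have K: "tau (WW * Z) \<in> Jr cR" unfolding Z_def by (rule K2[OF MM_dl])
    from D_lem[OF x y] have "D - WW \<in> Ir \<or> D + WW \<in> Ir" by (simp add: D_def)
    then show ?thesis
    proof
      assume "D - WW \<in> Ir"
      then have "tau (D * Z) - tau (WW * Z) \<in> Ir"
        using tau_Ir[OF Ir.rmul[of "D - WW" Z]] by (simp add: tau_diff left_diff_distrib)
      then show ?thesis using K by (rule Jr_of)
    next
      assume "D + WW \<in> Ir"
      then have "tau (D * Z) - (- tau (WW * Z)) \<in> Ir"
        using tau_Ir[OF Ir.rmul[of "D + WW" Z]] by (simp add: tau_add distrib_right)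
      then show ?thesis using Jr.neg[OF K] by (rule Jr_of)
    qed
  qed
  ultimately show ?thesis by (metis Jr_of)
qed

lemma MOVE:
  assumes y: "y = g2w \<or> y = - g2w"
  shows "\<forall>P Q. TT (P + y + gpow g1w i + Q) - TT (P + gpow g1w i + y + Q) \<in> Jr (cR :: 'k::field_char_0 R)"
proof (induction i rule: int_induct[where k = 0])
  case base then show ?case by (simp add: gpow_zero Jr.zero)
next
  case (step1 i)
  show ?case
  proof (intro allI)
    fix P Q
    have 1: "TT (P + y + g1w + gpow g1w i + Q) - TT (P + g1w + y + gpow g1w i + Q) \<in> Jr (cR :: 'k R)"
      using SWAP[OF _ y, where P=P and Q="gpow g1w i + Q" and x = g1w] by (simp add: add.assoc)
    have 2: "TT ((P + g1w) + y + gpow g1w i + Q) - TT ((P + g1w) + gpow g1w i + y + Q) \<in> Jr (cR :: 'k R)"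
      using step1(2) by blast
    show "TT (P + y + gpow g1w (i + 1) + Q) - TT (P + gpow g1w (i + 1) + y + Q) \<in> Jr (cR :: 'k R)"
      using Jr_trans[OF 1 2] by (simp add: gpow_succ add.assoc)
  qed
next
  case (step2 i)
  show ?case
  proof (intro allI)
    fix P Q
    have 1: "TT (P + y + - g1w + gpow g1w i + Q) - TT (P + - g1w + y + gpow g1w i + Q) \<in> Jr (cR :: 'k R)"
      using SWAP[OF _ y, where P=P and Q="gpow g1w i + Q" and x = "- g1w"] by (simp add: add.assoc del: add_uminus_conv_diff)
    have 2: "TT ((P + - g1w) + y + gpow g1w i + Q) - TT ((P + - g1w) + gpow g1w i + y + Q) \<in> Jr (cR :: 'k R)"
      using step2(2) by blast
    show "TT (P + y + gpow g1w (i - 1) + Q) - TT (P + gpow g1w (i - 1) + y + Q) \<in> Jr (cR :: 'k R)"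
      using Jr_trans[OF 1 2] by (simp add: gpow_pred add.assoc del: add_uminus_conv_diff)
  qed
qed

lemma ab_letter: "f2_ab ((b, s) # L) = (if b then 0 else (if s then 1 else -1), if b then (if s then 1 else -1) else 0) + f2_ab L"
  using ab_append[of "[(b, s)]" L] by (simp add: f2_ab_def)

lemma KEY: "\<forall>P. TT (P + sumL L) - TT (P + NN (f2_ab L)) \<in> Jr (cR :: 'k::field_char_0 R)"
proof (induction L)
  case Nil
  have "f2_ab [] = (0, 0)" by (simp add: f2_ab_def)
  then show ?case by (simp add: sumL_simps NN_def gpow_zero Jr.zero)
next
  case (Cons l L)
  obtain b s where l: "l = (b, s)" by force
  obtain i j where ij: "f2_ab L = (i, j)" by force
  show ?case
  proof
    fix P
    have IH: "TT ((P + lt l) + sumL L) - TT ((P + lt l) + NN (i, j)) \<in> Jr (cR :: 'k R)"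
      using Cons.IH ij by auto
    have "TT ((P + lt l) + NN (i, j)) - TT (P + NN (f2_ab (l # L))) \<in> Jr (cR :: 'k R)"
    proof (cases b)
      case False
      have "(P + lt l) + NN (i, j) = P + NN (f2_ab (l # L))"
        using l ij False by (cases s) (simp_all add: ab_letter NN_def lt_vals gpow_succ' gpow_pred' gpow_pred add.assoc
            del: add_uminus_conv_diff)
      then show ?thesis by (simp add: Jr.zero)
    next
      case True
      define y where "y = lt l"
      have y: "y = g2w \<or> y = - g2w" using l True by (cases s) (simp_all add: y_def lt_vals)
      have "NN (f2_ab (l # L)) = gpow g1w i + y + gpow g2w j"
        using l True ij by (cases s) (simp_all add: y_def ab_letter NN_def lt_vals add.assoc
            gpow_succ' gpow_pred' gpow_pred del: add_uminus_conv_diff)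
      moreover have "\<forall>P Q. TT (P + y + gpow g1w i + Q) - TT (P + gpow g1w i + y + Q) \<in> Jr (cR :: 'k R)"
        by (rule MOVE[OF y])
      ultimately show ?thesis by (simp add: NN_def y_def add.assoc)
    qed
    then show "TT (P + sumL (l # L)) - TT (P + NN (f2_ab (l # L))) \<in> Jr (cR :: 'k R)"
      using Jr_trans[OF IH] by (simp add: sumL_simps add.assoc)
  qed
qed

lemma KEY': "TT m - TT (NN (ab m)) \<in> Jr (cR :: 'k::field_char_0 R)"
  using spec[OF KEY[of "Rep_fw m"], of 0] by (simp add: sumL_Rep ab_def)



lemma sg_C_dl: "sg w c = C c * dl w"
  by (simp add: C_def dl_def mult_single)

lemma expansion: "p = (\<Sum>w\<in>ks p. sg w (lk p w))"
proof (rule poly_mapping_eqI)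
  fix k
  have "lk (\<Sum>w\<in>ks p. sg w (lk p w)) k = (\<Sum>w\<in>ks p. (lk p w when w = k))"
    by (simp add: lookup_sum lookup_single)
  also have "\<dots> = lk p k"
  proof (cases "k \<in> ks p")
    case True
    then have "(\<Sum>w\<in>ks p. (lk p w when w = k)) = (\<Sum>w\<in>{k}. (lk p w when w = k))"
      by (intro sum.mono_neutral_right) auto
    then show ?thesis by simp
  next
    case False
    then show ?thesis by (auto simp: in_keys_iff when_def intro!: sum.neutral)
  qed
  finally show "lk p k = lk (\<Sum>w\<in>ks p. sg w (lk p w)) k" by simp
qed

lemma tau_zero: "tau 0 = 0" by (simp add: tau_def star_zero)

lemma tau_sum: "finite A \<Longrightarrow> tau (sum f A) = (\<Sum>i\<in>A. tau (f i))"
  by (induction A rule: finite_induct) (simp_all add: tau_zero tau_add)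

lemma tau_Cdl: "tau (C c * dl w) = C c * tau (dl w)"
  by (simp add: tau_def star_mult star_C C_comm distrib_left)

lemma C_sum: "finite A \<Longrightarrow> C (sum f A) = (\<Sum>i\<in>A. C (f i))"
  by (induction A rule: finite_induct) (simp_all add: C_zero C_add[symmetric])

lemma epsf_sum: "epsf p v = (\<Sum>w\<in>{w \<in> ks p. ab w = v}. lk p w)"
proof -
  have "epsf p v = (\<Sum>w\<in>{w \<in> ks p. ab w = v}. (lk p w when ab w = v))"
    unfolding epsf_def by (rule Sum_any.expand_superset) (auto simp: in_keys_iff)
  also have "\<dots> = (\<Sum>w\<in>{w \<in> ks p. ab w = v}. lk p w)" by (rule sum.cong) auto
  finally show ?thesis .
qed

lemma forward:
  assumes S: "(p :: 'k::field_char_0 R) \<in> Sr" and E: "\<forall>v. epsf p v = 0"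
  shows "p \<in> Jr cR"
proof -
  let ?K = "ks p"
  have tp: "tau p = (\<Sum>w\<in>?K. C (lk p w) * TT w)"
    by (subst expansion) (simp add: tau_sum sg_C_dl tau_Cdl TT_def)
  have d: "tau p - (\<Sum>w\<in>?K. C (lk p w) * TT (NN (ab w))) \<in> Jr cR"
    unfolding tp sum_subtractf[symmetric] right_diff_distrib[symmetric]
    by (intro Jr_sum Jr.lmul Sr_C KEY') simp
  have "(\<Sum>w\<in>?K. C (lk p w) * TT (NN (ab w)) :: 'k R) =
      (\<Sum>v\<in>ab ` ?K. \<Sum>w\<in>{w \<in> ?K. ab w = v}. C (lk p w) * TT (NN (ab w)))"
    by (rule sum.image_gen) simp
  also have "\<dots> = (\<Sum>v\<in>ab ` ?K. C (\<Sum>w\<in>{w \<in> ?K. ab w = v}. lk p w) * TT (NN v))"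
    by (intro sum.cong refl) (simp add: C_sum sum_distrib_right)
  also have "\<dots> = 0"
  proof (rule sum.neutral, rule ballI)
    fix v
    have "(\<Sum>w\<in>{w \<in> ?K. ab w = v}. lk p w) = 0" using spec[OF E, of v] epsf_sum[of p v] by simp
    then show "C (\<Sum>w\<in>{w \<in> ?K. ab w = v}. lk p w) * TT (NN v) = 0" by (simp add: C_zero)
  qed
  finally have "tau p \<in> Jr cR" using d by simp
  then have 1: "tau p * hh \<in> Jr cR" by (simp add: hh_def Jr.rmul Sr_C)
  have "p - tau p * hh = - ((star p - p) * hh)"
  proof -
    have "p = (p + p) * hh" by (simp add: hh_def twice_half)
    then have "p - tau p * hh = (p + p) * hh - (p + star p) * hh" by (simp add: tau_def)
    also have "\<dots> = - ((star p - p) * hh)" by (simp add: algebra_simps)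
    finally show ?thesis .
  qed
  then have "p - tau p * hh \<in> Ir" using Sr_D[OF S] by (simp add: Ir.neg Ir.rmul)
  then show ?thesis using 1 by (rule Jr_of)
qed

definition eps :: "'k::field R \<Rightarrow> (int \<times> int) \<Rightarrow>\<^sub>0 'k" where
  "eps p = Abs_poly_mapping (epsf p)"

lemma lookup_eps: "lk (eps p) = epsf p"
proof -
  have "{v. epsf p v \<noteq> 0} \<subseteq> ab ` ks p"
  proof
    fix v assume "v \<in> {v. epsf p v \<noteq> 0}"
    then have "(\<Sum>w\<in>{w \<in> ks p. ab w = v}. lk p w) \<noteq> 0" by (simp add: epsf_sum)
    then have "{w \<in> ks p. ab w = v} \<noteq> {}" by (metis sum.empty)
    then obtain w where "w \<in> ks p" "ab w = v" by blast
    then show "v \<in> ab ` ks p" by auto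
  qed
  then have "finite {v. epsf p v \<noteq> 0}" by (rule finite_subset) simp
  then show ?thesis by (simp add: eps_def Abs_poly_mapping_inverse)
qed

lemma epsf_add: "epsf (p + q) v = epsf p v + epsf q v"
proof -
  have fp: "finite {w. (lk p w when ab w = v) \<noteq> 0}"
    by (rule finite_subset[of _ "ks p"]) (auto simp: in_keys_iff)
  have fq: "finite {w. (lk q w when ab w = v) \<noteq> 0}"
    by (rule finite_subset[of _ "ks q"]) (auto simp: in_keys_iff)
  show ?thesis unfolding epsf_def lookup_add when_add_distrib
    by (rule Sum_any.distrib[OF fp fq])
qed

lemma eps_add: "eps (p + q) = eps p + eps q"
  by (rule poly_mapping_eqI) (simp add: lookup_eps lookup_add epsf_add)

lemma eps_zero: "eps 0 = 0"
  by (rule poly_mapping_eqI) (simp add: lookup_eps epsf_def)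

lemma epsf_zero: "epsf 0 v = 0" by (simp add: epsf_def)

lemma epsf_neg: "epsf (- p) v = - epsf p v"
proof -
  have "epsf p v + epsf (- p) v = 0" using epsf_add[of p "- p" v] by (simp add: epsf_zero)
  then show ?thesis by (simp add: add_eq_0_iff)
qed

lemma eps_neg: "eps (- p) = - eps p"
  by (rule poly_mapping_eqI) (simp add: lookup_eps lookup_uminus epsf_neg)

lemma eps_diff: "eps (p - q) = eps p - eps q"
  using eps_add[of p "- q"] by (simp add: eps_neg)

lemma eps_sum: "finite A \<Longrightarrow> eps (sum f A) = (\<Sum>i\<in>A. eps (f i))"
  by (induction A rule: finite_induct) (simp_all add: eps_zero eps_add)

lemma eps_single: "eps (sg w c) = sg (ab w) c"
proof (rule poly_mapping_eqI)
  fix v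
  have "epsf (sg w c) v = (\<Sum>w'. (c when ab w = v) when w' = w)"
    unfolding epsf_def by (rule Sum_any.cong) (auto simp: lookup_single when_def)
  then show "lk (eps (sg w c)) v = lk (sg (ab w) c) v"
    by (simp add: lookup_eps lookup_single)
qed

lemma eps_mult: "eps (p * q) = eps p * eps q"
proof -
  have "p * q = (\<Sum>w\<in>ks p. \<Sum>w'\<in>ks q. sg (w + w') (lk p w * lk q w'))"
    apply (subst expansion[of p], subst expansion[of q])
    apply (simp add: sum_distrib_left sum_distrib_right mult_single)
    apply (rule sum.swap)
    done
  then have "eps (p * q) = (\<Sum>w\<in>ks p. \<Sum>w'\<in>ks q. sg (ab w + ab w') (lk p w * lk q w'))"
    by (simp add: eps_sum eps_single ab_plus)
  also have "\<dots> = eps p * eps q"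
  proof -
    have ep: "eps r = (\<Sum>w\<in>ks r. sg (ab w) (lk r w))" for r :: "'a R"
    proof -
      have "eps r = eps (\<Sum>w\<in>ks r. sg w (lk r w))" using arg_cong[OF expansion[of r], of eps] .
      then show ?thesis by (simp add: eps_sum eps_single)
    qed
    show ?thesis
      apply (simp only: ep[of p] ep[of q] sum_distrib_left sum_distrib_right mult_single)
      apply (rule sum.swap)
      done
  qed
  finally show ?thesis .
qed

lemma eps_Ir: "u \<in> Ir \<Longrightarrow> eps u = 0"
proof (induction rule: Ir.induct)
  case (gen b a) then show ?case by (simp add: eps_diff eps_mult mult.commute)
qed (simp_all add: eps_zero eps_add eps_neg eps_mult)

lemma star_LL: "star LL = - LL"
  by (simp add: LL_def star_mult star_hh star_WW hh_comm)

lemma cR_Sr: "cR \<in> Sr"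
proof (rule Sr_I)
  show "star cR = cR"
    by (simp add: cR_def star_mult star_hh star_neg star_add star_diff star_LL) (simp add: hh_comm)
qed

lemma eps_cR: "eps (cR :: 'k::field_char_0 R) = 0"
proof -
  have "eps (WW :: 'k R) = 0" by (simp add: WW_def eps_diff eps_mult mult.commute)
  then show ?thesis by (simp add: cR_def LL_def eps_mult eps_neg eps_add eps_diff)
qed

lemma eps_Jr: "u \<in> Jr (cR :: 'k::field_char_0 R) \<Longrightarrow> eps u = 0"
proof (induction rule: Jr.induct)
  case gen then show ?case by (rule eps_cR)
next
  case (cls u w) then show ?case using eps_Ir[of w] by (simp add: eps_add)
qed (simp_all add: eps_zero eps_add eps_neg eps_mult)

lemma core: "((p :: 'k::field_char_0 R) \<in> Sr \<and> (\<forall>v. epsf p v = 0)) \<longleftrightarrow> p \<in> Jr cR"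
proof
  assume "p \<in> Sr \<and> (\<forall>v. epsf p v = 0)" then show "p \<in> Jr cR" using forward by blast
next
  assume J: "p \<in> Jr cR"
  have "p \<in> Sr" by (rule Jr_Sr[OF cR_Sr J])
  moreover have "epsf p v = 0" for v using eps_Jr[OF J] lookup_eps[of p] by (metis lookup_zero)
  ultimately show "p \<in> Sr \<and> (\<forall>v. epsf p v = 0)" by blast
qed



theorem mainTheorem17:
  "{y \<in> sym_rep F2. gpush f2_ab y \<in> comm_ideal ZZ} =
   (pideal F2 (gdot F2 (glie F2 (gvec F2 (gdelta g1)) (gvec F2 (gdelta g2)))
                       (glie F2 (gvec F2 (gdelta g1)) (gvec F2 (gdelta g2))))
     :: (f2letter list \<Rightarrow> 'k::field_char_0) set)"
proof -
  define c :: "f2letter list \<Rightarrow> 'k" where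
    "c = gdot F2 (glie F2 (gvec F2 (gdelta g1)) (gvec F2 (gdelta g2)))
                       (glie F2 (gvec F2 (gdelta g1)) (gvec F2 (gdelta g2)))"
  have r1: "f2_reduced g1" and r2: "f2_reduced g2" by (simp_all add: g1_def g2_def)
  have d1: "gdelta g1 \<in> galg F2" and d2: "gdelta g2 \<in> galg F2" using r1 r2 by (simp_all add: gdelta_galg)
  have cg: "c \<in> galg F2" unfolding c_def by (intro gdot_galg glie_galg gvec_galg d1 d2)
  have pu: "Phi (gvec F2 (gdelta g1)) = (uu :: 'k R)"
    by (simp add: Phi_gvec d1 Phi_delta r1 uu_def hh_def star_dl dl_def[symmetric] g1w_def[symmetric])
  have pv: "Phi (gvec F2 (gdelta g2)) = (vv :: 'k R)"
    by (simp add: Phi_gvec d2 Phi_delta r2 vv_def hh_def star_dl dl_def[symmetric] g2w_def[symmetric])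
  have pl: "Phi (glie F2 (gvec F2 (gdelta g1)) (gvec F2 (gdelta g2))) = (LL :: 'k R)"
    by (simp add: Phi_glie gvec_galg d1 d2 pu pv LL_def WW_def hh_def)
  have pc: "Phi c = cR"
    unfolding c_def by (simp add: Phi_gdot glie_galg gvec_galg d1 d2 pl cR_def hh_def)
  show ?thesis
    unfolding c_def[symmetric]
  proof (intro equalityI subsetI)
    fix y :: "f2letter list \<Rightarrow> 'k" assume "y \<in> {y \<in> sym_rep F2. gpush f2_ab y \<in> comm_ideal ZZ}"
    then have y: "y \<in> galg F2" "Phi y \<in> Sr" and g: "gpush f2_ab y = (\<lambda>x. 0)"
      by (auto simp: SR_iff dest: CZ)
    have "\<forall>v. epsf (Phi y) v = 0" using g gpush_eps[OF y(1)] by metis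
    then have "Phi y \<in> Jr cR" using core[of "Phi y"] y(2) by blast
    then have "Phi y \<in> Jr (Phi c)" using pc by simp
    then show "y \<in> pideal F2 c" using P2[OF cg] Psi_Phi[OF y(1)] by metis
  next
    fix y :: "f2letter list \<Rightarrow> 'k" assume "y \<in> pideal F2 c"
    then have y: "y \<in> galg F2" "Phi y \<in> Jr cR" using P1[OF cg] pc by auto
    then have S: "Phi y \<in> Sr" and E: "\<forall>v. epsf (Phi y) v = 0" using core by blast+
    have "gpush f2_ab y = (\<lambda>x. 0)" using E gpush_eps[OF y(1)] by auto
    then show "y \<in> {y \<in> sym_rep F2. gpush f2_ab y \<in> comm_ideal ZZ}"
      using S y(1) by (simp add: SR_iff comm_ideal.zero)
  qed
qed


end
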